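(* There is an absolute constant $c>0$ such that the following holds. For any even $A\ge2$, any $S\ge1$, any $\eta>0$, and any $n>16SA\vee 4\eta^2SA$, and for any estimator $\hat\pi$ that maps a dataset of $n$ context-action-reward triples to a policy $\hat\pi\in\Delta(\mathcal A|\mathcal S)$ with full support, $$\sup_{\text{instances }(\mathcal S,\mathcal A,r,\rho,\pi^{\mathrm{ref}}):\ |\mathcal S|=S,\ |\mathcal A|=A}\ \mathbb E_{\mathcal D\sim P_{\pi^{\mathrm{ref}},r}}\big[\mathrm{SubOpt}(\hat\pi)\big]\ \ge\ c\,\frac{\eta SA}{n}.$$
   Context: An instance is an offline contextual bandit with finite context set $\mathcal S$, finite action set $\mathcal A$, mean reward $r:\mathcal S\times\mathcal A\to[0,1]$, context distribution $\rho\in\Delta(\mathcal S)$, and reference policy $\pi^{\mathrm{ref}}\in\Delta(\mathcal A|\mathcal S)$ with $\pi^{\mathrm{ref}}(a|s)>0$ for all $(s,a)$. The dataset $\mathcal D\sim P_{\pi^{\mathrm{ref}},r}$ consists of $n$ i.i.d. triples $(s_i,a_i,r_i)$ with $s_i\sim\rho$, $a_i\sim\pi^{\mathrm{ref}}(\cdot|s_i)$, $r_i=r(s_i,a_i)+\varepsilon_i$ with i.i.d. mean-zero $1$-subgaussian noise. For $\eta>0$, $J(\pi)=\mathbb E_{s\sim\rho}\big[\sum_a r(s,a)\pi(a|s)-\eta^{-1}\mathrm{KL}(\pi^{\mathrm{ref}}(\cdot|s)\|\pi(\cdot|s))\big]$, $\pi^*=\arg\max_\pi J(\pi)$, and $\mathrm{SubOpt}(\pi)=J(\pi^*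 )-J(\pi)$. *)

theory Defs
  imports "HOL-Probability.Probability"
begin

text \<open>Contexts are {0..<S}, actions are {0..<A} (as natural numbers).
 Policies / reference policy are functions nat => nat => real,
 pi s a = probability of action a in context s.\<close>

definition is_policy :: "nat \<Rightarrow> nat \<Rightarrow> (nat \<Rightarrow> nat \<Rightarrow> real) \<Rightarrow> bool" where
  "is_policy S A \<pi> \<longleftrightarrow> (\<forall>s<S. (\<forall>a<A. 0 < \<pi> s a) \<and> (\<Sum>a<A. \<pi> s a) = 1)"

definition KL :: "nat \<Rightarrow> (nat \<Rightarrow> real) \<Rightarrow> (nat \<Rightarrow> real) \<Rightarrow> real" where
  "KL A p q = (\<Sum>a<A. p a * ln (p a / q a))"

definition J :: "nat \<Rightarrow> nat \<Rightarrow> real \<Rightarrow> (nat \<Rightarrow> nat \<Rightarrow> real) \<Rightarrow> (nat \<Rightarrow> real)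
                 \<Rightarrow> (nat \<Rightarrow> nat \<Rightarrow> real) \<Rightarrow> (nat \<Rightarrow> nat \<Rightarrow> real) \<Rightarrow> real" where
  "J S A \<eta> r \<rho> \<pi>ref \<pi> =
     (\<Sum>s<S. \<rho> s * ((\<Sum>a<A. r s a * \<pi> s a) - KL A (\<pi>ref s) (\<pi> s) / \<eta>))"

text \<open>J(pi*) with pi* the maximiser of J; KL(pi_ref || pi) is infinite unless pi has
 full support, so the maximum is over full-support policies.\<close>
definition SubOpt :: "nat \<Rightarrow> nat \<Rightarrow> real \<Rightarrow> (nat \<Rightarrow> nat \<Rightarrow> real) \<Rightarrow> (nat \<Rightarrow> real)
                 \<Rightarrow> (nat \<Rightarrow> nat \<Rightarrow> real) \<Rightarrow> (nat \<Rightarrow> nat \<Rightarrow> real) \<Rightarrow> real" where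
  "SubOpt S A \<eta> r \<rho> \<pi>ref \<pi> =
     (SUP \<pi>' \<in> {\<pi>'. is_policy S A \<pi>'}. J S A \<eta> r \<rho> \<pi>ref \<pi>') - J S A \<eta> r \<rho> \<pi>ref \<pi>"

definition subgaussian_noise :: "real measure \<Rightarrow> bool" where
  "subgaussian_noise \<nu> \<longleftrightarrow> prob_space \<nu> \<and> sets \<nu> = sets borel \<and>
     integrable \<nu> (\<lambda>x. x) \<and> (\<integral>x. x \<partial>\<nu>) = 0 \<and>
     (\<forall>l::real. integrable \<nu> (\<lambda>x. exp (l * x)) \<and> (\<integral>x. exp (l * x) \<partial>\<nu>) \<le> exp (l\<^sup>2 / 2))"

definition valid_instance :: "nat \<Rightarrow> nat \<Rightarrow> (nat \<Rightarrow> nat \<Rightarrow> real) \<Rightarrow> (nat \<Rightarrow> real)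
                 \<Rightarrow> (nat \<Rightarrow> nat \<Rightarrow> real) \<Rightarrow> real measure \<Rightarrow> bool" where
  "valid_instance S A r \<rho> \<pi>ref \<nu> \<longleftrightarrow>
     (\<forall>s<S. \<forall>a<A. 0 \<le> r s a \<and> r s a \<le> 1) \<and>
     (\<forall>s<S. 0 \<le> \<rho> s) \<and> (\<Sum>s<S. \<rho> s) = 1 \<and>
     is_policy S A \<pi>ref \<and> subgaussian_noise \<nu>"

definition fin_dist :: "nat \<Rightarrow> (nat \<Rightarrow> real) \<Rightarrow> nat measure" where
  "fin_dist k f = density (count_space UNIV) (\<lambda>x. ennreal (if x < k then f x else 0))"

definition triple_space :: "(nat \<times> nat \<times> real) measure" where
  "triple_space = count_space UNIV \<Otimes>\<^sub>M (count_space UNIV \<Otimes>\<^sub>M borel)"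

definition sample_measure :: "nat \<Rightarrow> nat \<Rightarrow> (nat \<Rightarrow> nat \<Rightarrow> real) \<Rightarrow> (nat \<Rightarrow> real)
                 \<Rightarrow> (nat \<Rightarrow> nat \<Rightarrow> real) \<Rightarrow> real measure \<Rightarrow> (nat \<times> nat \<times> real) measure" where
  "sample_measure S A r \<rho> \<pi>ref \<nu> =
     fin_dist S \<rho> \<bind> (\<lambda>s. fin_dist A (\<pi>ref s) \<bind>
       (\<lambda>a. distr \<nu> triple_space (\<lambda>e. (s, a, r s a + e))))"

definition data_space :: "nat \<Rightarrow> (nat \<Rightarrow> nat \<times> nat \<times> real) measure" where
  "data_space n = PiM {..<n} (\<lambda>_. triple_space)"

definition data_measure :: "nat \<Rightarrow> nat \<Rightarrow> nat \<Rightarrow> (nat \<Rightarrow> nat \<Rightarrow> real) \<Rightarrow> (nat \<Rightarrow> real)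
                 \<Rightarrow> (nat \<Rightarrow> nat \<Rightarrow> real) \<Rightarrow> real measure \<Rightarrow> (nat \<Rightarrow> nat \<times> nat \<times> real) measure" where
  "data_measure n S A r \<rho> \<pi>ref \<nu> = PiM {..<n} (\<lambda>_. sample_measure S A r \<rho> \<pi>ref \<nu>)"

definition estimator :: "nat \<Rightarrow> nat \<Rightarrow> nat \<Rightarrow> ((nat \<Rightarrow> nat \<times> nat \<times> real) \<Rightarrow> nat \<Rightarrow> nat \<Rightarrow> real) \<Rightarrow> bool" where
  "estimator n S A \<pi>hat \<longleftrightarrow> (\<forall>D. is_policy S A (\<pi>hat D)) \<and>
     (\<forall>s<S. \<forall>a<A. (\<lambda>D. \<pi>hat D s a) \<in> borel_measurable (data_space n))"

text \<open>Expected suboptimality (nonnegative, so taken as a nonnegative integral).\<close>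
definition risk :: "nat \<Rightarrow> nat \<Rightarrow> nat \<Rightarrow> real \<Rightarrow> ((nat \<Rightarrow> nat \<times> nat \<times> real) \<Rightarrow> nat \<Rightarrow> nat \<Rightarrow> real)
                 \<Rightarrow> (nat \<Rightarrow> nat \<Rightarrow> real) \<Rightarrow> (nat \<Rightarrow> real)
                 \<Rightarrow> (nat \<Rightarrow> nat \<Rightarrow> real) \<Rightarrow> real measure \<Rightarrow> ennreal" where
  "risk n S A \<eta> \<pi>hat r \<rho> \<pi>ref \<nu> =
     (\<integral>\<^sup>+ D. ennreal (SubOpt S A \<eta> r \<rho> \<pi>ref (\<pi>hat D)) \<partial>data_measure n S A r \<rho> \<pi>ref \<nu>)"

end

theory Submission
  imports Defs
begin

lemma fin_dist_nn_integral:
  "(\<integral>\<^sup>+x. h x \<partial>fin_dist k f) = (\<Sum>x<k. ennreal (f x) * h x)"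
proof -
  have "(\<integral>\<^sup>+x. h x \<partial>fin_dist k f) =
     (\<integral>\<^sup>+x. ennreal (if x < k then f x else 0) * h x \<partial>count_space UNIV)"
    unfolding fin_dist_def by (subst nn_integral_density) auto
  also have "\<dots> = (\<Sum>x\<in>{..<k}. ennreal (if x < k then f x else 0) * h x)"
    by (rule nn_integral_count_space') auto
  also have "\<dots> = (\<Sum>x<k. ennreal (f x) * h x)" by (rule sum.cong) auto
  finally show ?thesis .
qed

lemma sets_fin_dist[simp]: "sets (fin_dist k f) = sets (count_space UNIV)"
  unfolding fin_dist_def by simp

lemma space_fin_dist[simp]: "space (fin_dist k f) = UNIV"
  unfolding fin_dist_def by simp

lemma fin_dist_prob:
  assumes "\<forall>x<k. 0 \<le> f x" "(\<Sum>x<k. f x) = 1"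
  shows "prob_space (fin_dist k f)"
proof
  have "emeasure (fin_dist k f) (space (fin_dist k f)) = (\<integral>\<^sup>+x. 1 \<partial>fin_dist k f)"
    by simp
  also have "\<dots> = (\<Sum>x<k. ennreal (f x))" using fin_dist_nn_integral[where h="\<lambda>_. 1" and k=k and f=f] by simp
  also have "\<dots> = ennreal (\<Sum>x<k. f x)" using assms(1) by (subst sum_ennreal) auto
  finally show "emeasure (fin_dist k f) (space (fin_dist k f)) = 1" using assms(2) by simp
qed

lemma space_triple[simp]: "space triple_space = UNIV"
  unfolding triple_space_def by (simp add: space_pair_measure)

lemma sing_triple: "{x} \<in> sets triple_space"
proof -
  obtain s a v where x: "x = (s,a,v)" by (cases x) auto
  have "{x} = {s} \<times> ({a} \<times> {v})" using x by auto
  also have "\<dots> \<in> sets triple_space" unfolding triple_space_def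
    by (intro pair_measureI) auto
  finally show ?thesis .
qed

lemma sample_measure_det:
  "sample_measure S A r \<rho> p (return borel 0) =
     fin_dist S \<rho> \<bind> (\<lambda>s. fin_dist A (p s) \<bind> (\<lambda>a. return triple_space (s, a, r s a)))"
proof -
  have "distr (return borel 0) triple_space (\<lambda>e. (s, a, r s a + e)) = return triple_space (s, a, r s a)"
    for s a
  proof -
    have "(\<lambda>e::real. (s, a, r s a + e)) \<in> borel \<rightarrow>\<^sub>M triple_space"
      unfolding triple_space_def by measurable
    then show ?thesis by (subst distr_return) auto
  qed
  then show ?thesis unfolding sample_measure_def by simp
qed

lemma inner_in_space:
  assumes "\<forall>a<A. 0 \<le> q a" "(\<Sum>a<A. q a) = 1"
  shows "fin_dist A q \<bind> (\<lambda>a. return triple_space (s, a, r s a)) \<in> space (subprob_algebra triple_space)"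
proof -
  have m: "(\<lambda>a. return triple_space (s, a, r s a)) \<in> measurable (fin_dist A q) (subprob_algebra triple_space)"
    by (auto simp: space_subprob_algebra subprob_space_return measurable_cong_sets[OF sets_fin_dist refl])
  interpret prob_space "fin_dist A q" using fin_dist_prob assms by blast
  have "subprob_space (fin_dist A q \<bind> (\<lambda>a. return triple_space (s, a, r s a)))"
    by (rule subprob_space_bind[OF _ m]) (rule subprob_space_axioms)
  then show ?thesis by (simp add: space_subprob_algebra)
qed

lemma emeasure_inner:
  assumes "X \<in> sets triple_space"
  shows "emeasure (fin_dist A q \<bind> (\<lambda>a. return triple_space (s, a, r s a))) X
     = (\<Sum>a<A. ennreal (q a) * indicator X (s, a, r s a))"
proof -
  have m: "(\<lambda>a. return triple_space (s, a, r s a)) \<in> measurable (fin_dist A q) (subprob_algebra triple_space)"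
    by (auto simp: space_subprob_algebra subprob_space_return measurable_cong_sets[OF sets_fin_dist refl])
  show ?thesis
    by (subst emeasure_bind[OF _ m assms]) (simp_all only: fin_dist_nn_integral emeasure_return[OF assms] space_fin_dist, simp)
qed

lemma emeasure_sample:
  assumes "X \<in> sets triple_space"
    and p: "\<forall>s. (\<forall>a<A. 0 \<le> p s a) \<and> (\<Sum>a<A. p s a) = 1"
  shows "emeasure (sample_measure S A r \<rho> p (return borel 0)) X
     = (\<Sum>s<S. ennreal (\<rho> s) * (\<Sum>a<A. ennreal (p s a) * indicator X (s, a, r s a)))"
proof -
  have m: "(\<lambda>s. fin_dist A (p s) \<bind> (\<lambda>a. return triple_space (s, a, r s a)))
     \<in> measurable (fin_dist S \<rho>) (subprob_algebra triple_space)"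
    using inner_in_space p by (auto simp: measurable_cong_sets[OF sets_fin_dist refl])
  show ?thesis unfolding sample_measure_det
    by (subst emeasure_bind[OF _ m assms(1)]) (auto simp: fin_dist_nn_integral emeasure_inner[OF assms(1)])
qed

definition Dset :: "nat \<Rightarrow> nat \<Rightarrow> nat \<Rightarrow> (nat \<Rightarrow> nat \<times> nat) set" where
  "Dset n S A = PiE {..<n} (\<lambda>_. {..<S} \<times> {..<A})"

definition Dof :: "nat \<Rightarrow> (nat \<Rightarrow> nat \<Rightarrow> real) \<Rightarrow> (nat \<Rightarrow> nat \<times> nat) \<Rightarrow> (nat \<Rightarrow> nat \<times> nat \<times> real)" where
  "Dof n r x = restrict (\<lambda>i. (fst (x i), snd (x i), r (fst (x i)) (snd (x i)))) {..<n}"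

definition Wt :: "nat \<Rightarrow> (nat \<Rightarrow> real) \<Rightarrow> (nat \<Rightarrow> nat \<Rightarrow> real) \<Rightarrow> (nat \<Rightarrow> nat \<times> nat) \<Rightarrow> real" where
  "Wt n \<rho> p x = (\<Prod>i<n. \<rho> (fst (x i)) * p (fst (x i)) (snd (x i)))"

lemma Dof_inj:
  assumes "x \<in> Dset n S A" "y \<in> Dset n S A" "Dof n r x = Dof n r y"
  shows "x = y"
proof (rule ext)
  fix i
  show "x i = y i"
  proof (cases "i < n")
    case True
    then have "Dof n r x i = Dof n r y i" using assms(3) by simp
    then show ?thesis using True unfolding Dof_def by (auto intro: prod_eqI)
  next
    case False
    then show ?thesis using assms(1,2) unfolding Dset_def by (auto simp: PiE_def extensional_def)
  qed
qed

lemma sample_prob: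
  assumes p: "\<forall>s. (\<forall>a<A. 0 \<le> p s a) \<and> (\<Sum>a<A. p s a) = 1"
    and rho: "\<forall>s<S. 0 \<le> \<rho> s" "(\<Sum>s<S. \<rho> s) = 1"
  shows "prob_space (sample_measure S A r \<rho> p (return borel 0))"
proof
  have "emeasure (sample_measure S A r \<rho> p (return borel 0)) UNIV
     = (\<Sum>s<S. ennreal (\<rho> s) * (\<Sum>a<A. ennreal (p s a) * indicator UNIV (s, a, r s a)))"
    by (rule emeasure_sample[OF _ p]) (metis sets.top space_triple)
  also have "\<dots> = (\<Sum>s<S. ennreal (\<rho> s) * ennreal (\<Sum>a<A. p s a))"
    using p by (intro sum.cong refl, subst sum_ennreal[symmetric]) auto
  also have "\<dots> = (\<Sum>s<S. ennreal (\<rho> s))" using p by simp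
  also have "\<dots> = 1" using rho by (subst sum_ennreal) auto
  finally show "emeasure (sample_measure S A r \<rho> p (return borel 0))
     (space (sample_measure S A r \<rho> p (return borel 0))) = 1"
    using emeasure_sample[OF _ p] 
    by (subst sets_eq_imp_space_eq[of _ triple_space]) (simp_all add: sample_measure_det)
qed

lemma sets_sample[simp]: "sets (sample_measure S A r \<rho> p (return borel 0)) = sets triple_space"
  unfolding sample_measure_det by (subst sets_bind, subst sets_bind) auto

lemma emeasure_sample_sing:
  assumes p: "\<forall>s. (\<forall>a<A. 0 \<le> p s a) \<and> (\<Sum>a<A. p s a) = 1"
    and rho: "\<forall>s<S. 0 \<le> \<rho> s"
    and s0: "s0 < S" and a0: "a0 < A"
  shows "emeasure (sample_measure S A r \<rho> p (return borel 0)) {(s0, a0, r s0 a0)} = ennreal (\<rho> s0 * p s0 a0)"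
proof -
  have "emeasure (sample_measure S A r \<rho> p (return borel 0)) {(s0, a0, r s0 a0)}
     = (\<Sum>s<S. ennreal (\<rho> s) * (\<Sum>a<A. ennreal (p s a) * indicator {(s0, a0, r s0 a0)} (s, a, r s a)))"
    by (rule emeasure_sample[OF sing_triple p])
  also have "\<dots> = (\<Sum>s<S. if s = s0 then ennreal (\<rho> s0 * p s0 a0) else 0)"
  proof (rule sum.cong[OF refl])
    fix s assume "s \<in> {..<S}"
    show "ennreal (\<rho> s) * (\<Sum>a<A. ennreal (p s a) * indicator {(s0, a0, r s0 a0)} (s, a, r s a))
       = (if s = s0 then ennreal (\<rho> s0 * p s0 a0) else 0)"
    proof (cases "s = s0")
      case True
      have "(\<Sum>a<A. ennreal (p s a) * indicator {(s0, a0, r s0 a0)} (s, a, r s a))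
         = (\<Sum>a<A. if a = a0 then ennreal (p s0 a0) else 0)"
        using True by (intro sum.cong) (auto simp: indicator_def)
      also have "\<dots> = ennreal (p s0 a0)" using a0 by (simp add: sum.delta)
      finally show ?thesis using True rho s0 p a0 by (simp add: ennreal_mult)
    next
      case False
      then show ?thesis by (simp add: indicator_def)
    qed
  qed
  also have "\<dots> = ennreal (\<rho> s0 * p s0 a0)" using s0 by (simp add: sum.delta)
  finally show ?thesis .
qed

lemma emeasure_data_sing:
  assumes p: "\<forall>s. (\<forall>a<A. 0 \<le> p s a) \<and> (\<Sum>a<A. p s a) = 1"
    and rho: "\<forall>s<S. 0 \<le> \<rho> s" "(\<Sum>s<S. \<rho> s) = 1"
    and x: "x \<in> Dset n S A"
  shows "emeasure (data_measure n S A r \<rho> p (return borel 0)) {Dof n r x} = ennreal (Wt n \<rho> p x)"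
proof -
  let ?M = "sample_measure S A r \<rho> p (return borel 0)"
  interpret product_sigma_finite "\<lambda>_::nat. ?M"
    unfolding product_sigma_finite_def using prob_space_imp_sigma_finite[OF sample_prob[OF p rho]] by blast
  have ext: "Dof n r x \<in> extensional {..<n}" unfolding Dof_def by simp
  have "{Dof n r x} = PiE {..<n} (\<lambda>i. {Dof n r x i})" by (rule PiE_singleton[OF ext, symmetric])
  moreover have "emeasure (PiM {..<n} (\<lambda>_. ?M)) (PiE {..<n} (\<lambda>i. {Dof n r x i}))
     = (\<Prod>i<n. emeasure ?M {Dof n r x i})"
    by (rule emeasure_PiM) (auto simp: sing_triple)
  ultimately have "emeasure (data_measure n S A r \<rho> p (return borel 0)) {Dof n r x}
     = (\<Prod>i<n. emeasure ?M {Dof n r x i})"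
    unfolding data_measure_def by simp
  also have "\<dots> = (\<Prod>i<n. ennreal (\<rho> (fst (x i)) * p (fst (x i)) (snd (x i))))"
  proof (rule prod.cong[OF refl])
    fix i assume i: "i \<in> {..<n}"
    then have xi: "x i \<in> {..<S} \<times> {..<A}" using x unfolding Dset_def by auto
    have "Dof n r x i = (fst (x i), snd (x i), r (fst (x i)) (snd (x i)))" using i unfolding Dof_def by simp
    then show "emeasure ?M {Dof n r x i} = ennreal (\<rho> (fst (x i)) * p (fst (x i)) (snd (x i)))"
      using xi by (simp add: emeasure_sample_sing[OF p rho(1)] mem_Times_iff)
  qed
  also have "\<dots> = ennreal (Wt n \<rho> p x)" unfolding Wt_def
    using p rho x unfolding Dset_def
    by (subst prod_ennreal) (auto simp: PiE_def Pi_def)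
  finally show ?thesis .
qed

lemma Wt_nonneg:
  assumes p: "\<forall>s. (\<forall>a<A. 0 \<le> p s a) \<and> (\<Sum>a<A. p s a) = 1"
    and rho: "\<forall>s<S. 0 \<le> \<rho> s" and x: "x \<in> Dset n S A"
  shows "0 \<le> Wt n \<rho> p x"
  unfolding Wt_def using p rho x unfolding Dset_def
  by (intro prod_nonneg) (force simp: PiE_def Pi_def mem_Times_iff)

lemma nn_lower:
  assumes p: "\<forall>s. (\<forall>a<A. 0 \<le> p s a) \<and> (\<Sum>a<A. p s a) = 1"
    and rho: "\<forall>s<S. 0 \<le> \<rho> s" "(\<Sum>s<S. \<rho> s) = 1"
    and G: "\<forall>D. 0 \<le> G D"
  shows "ennreal (\<Sum>x\<in>Dset n S A. Wt n \<rho> p x * G (Dof n r x))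
     \<le> (\<integral>\<^sup>+D. ennreal (G D) \<partial>data_measure n S A r \<rho> p (return borel 0))"
proof -
  let ?M = "data_measure n S A r \<rho> p (return borel 0)"
  let ?F = "Dset n S A"
  have fin: "finite ?F" unfolding Dset_def by (intro finite_PiE) auto
  have meas: "{Dof n r x} \<in> sets ?M" for x
  proof -
    have ext: "Dof n r x \<in> extensional {..<n}" unfolding Dof_def by simp
    have "PiE {..<n} (\<lambda>i. {Dof n r x i}) \<in> sets ?M"
      unfolding data_measure_def by (rule sets_PiM_I_finite) (simp_all add: sing_triple)
    then show ?thesis using PiE_singleton[OF ext] by simp
  qed
  have "ennreal (\<Sum>x\<in>?F. Wt n \<rho> p x * G (Dof n r x))
      = (\<Sum>x\<in>?F. ennreal (Wt n \<rho> p x * G (Dof n r x)))"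
    by (rule sum_ennreal[symmetric]) (intro mult_nonneg_nonneg Wt_nonneg[OF p rho(1)] G[rule_format])
  also have "\<dots> = (\<Sum>x\<in>?F. ennreal (G (Dof n r x)) * emeasure ?M {Dof n r x})"
  proof (rule sum.cong[OF refl])
    fix x assume x: "x \<in> ?F"
    show "ennreal (Wt n \<rho> p x * G (Dof n r x)) = ennreal (G (Dof n r x)) * emeasure ?M {Dof n r x}"
      unfolding emeasure_data_sing[OF p rho x]
      using Wt_nonneg[OF p rho(1) x] G ennreal_mult[of "Wt n \<rho> p x" "G (Dof n r x)"] by (metis mult.commute)
  qed
  also have "\<dots> = (\<Sum>x\<in>?F. \<integral>\<^sup>+D. ennreal (G (Dof n r x)) * indicator {Dof n r x} D \<partial>?M)"
    using meas by (intro sum.cong refl nn_integral_cmult_indicator[symmetric])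
  also have "\<dots> = (\<integral>\<^sup>+D. (\<Sum>x\<in>?F. ennreal (G (Dof n r x)) * indicator {Dof n r x} D) \<partial>?M)"
    using meas by (intro nn_integral_sum[symmetric]) simp
  also have "\<dots> \<le> (\<integral>\<^sup>+D. ennreal (G D) \<partial>?M)"
  proof (rule nn_integral_mono)
    fix D
    show "(\<Sum>x\<in>?F. ennreal (G (Dof n r x)) * indicator {Dof n r x} D) \<le> ennreal (G D)"
    proof (cases "\<exists>x0\<in>?F. D = Dof n r x0")
      case True
      then obtain x0 where x0: "x0 \<in> ?F" "D = Dof n r x0" by blast
      have "(\<Sum>x\<in>?F. ennreal (G (Dof n r x)) * indicator {Dof n r x} D)
          = (\<Sum>x\<in>?F. if x = x0 then ennreal (G D) else 0)"
      proof (rule sum.cong[OF refl])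
        fix x assume x: "x \<in> ?F"
        show "ennreal (G (Dof n r x)) * indicator {Dof n r x} D = (if x = x0 then ennreal (G D) else 0)"
        proof (cases "x = x0")
          case True then show ?thesis using x0 by simp
        next
          case False
          then have "D \<noteq> Dof n r x" using x0 x Dof_inj[of x n S A x0 r] by metis
          then show ?thesis using False by simp
        qed
      qed
      also have "\<dots> = ennreal (G D)" using x0 fin by simp
      finally show ?thesis by simp
    next
      case False
      then have "(\<Sum>x\<in>?F. ennreal (G (Dof n r x)) * indicator {Dof n r x} D) = 0"
        by (intro sum.neutral) (auto simp: indicator_def)
      then show ?thesis by simp
    qed
  qed
  finally show ?thesis .
qed

definition phi :: "real \<Rightarrow> real" where "phi x = x - 1 - ln x"

lemma phi_nonneg: "0 < x \<Longrightarrow> 0 \<le> phi x"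
  unfolding phi_def using ln_le_minus_one[of x] by simp

lemma phi_pair:
  assumes x: "0 < x" and u: "0 < u" and v: "0 < v"
  shows "(u - v)^2 / (u + v)^2 \<le> phi (x / u) + phi (x / v)"
proof -
  define w where "w = u + v"
  have w: "0 < w" unfolding w_def using u v by simp
  define y where "y = x * w / (2 * u * v)"
  define z where "z = 4 * u * v / w^2"
  have y: "0 < y" unfolding y_def using x u v w by simp
  have z: "0 < z" unfolding z_def using u v w by simp
  have "x / u * (x / v) = y^2 * z" unfolding y_def z_def using u v w
    by (simp add: field_simps power2_eq_square)
  then have "ln (x / u * (x / v)) = ln (y^2 * z)" by simp
  moreover have "ln (x / u * (x / v)) = ln (x / u) + ln (x / v)" using x u v ln_mult[of "x/u" "x/v"] by (simp del: times_divide_eq_left times_divide_eq_right)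
  moreover have "ln (y^2 * z) = ln (y^2) + ln z" using y z by (simp add: ln_mult)
  moreover have "ln (y^2) = 2 * ln y" using y by (simp add: ln_realpow)
  ultimately have "ln (x / u) + ln (x / v) = 2 * ln y + ln z" by simp
  moreover have "x / u + x / v = 2 * y" unfolding y_def w_def using u v by (simp add: field_simps)
  moreover have "ln y \<le> y - 1" using ln_le_minus_one[OF y] .
  moreover have "ln z \<le> z - 1" using ln_le_minus_one[OF z] .
  moreover have "1 - z = (u - v)^2 / (u + v)^2" unfolding z_def using u v w
    by (simp add: field_simps power2_eq_square w_def[symmetric]) (simp add: w_def algebra_simps power2_eq_square)
  ultimately show ?thesis unfolding phi_def by linarith
qed

lemma ctx_identity:
  assumes eta: "0 < \<eta>"
    and pos: "\<forall>a<A. 0 < p a \<and> 0 < q a \<and> 0 < \<pi> a"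
    and sq: "(\<Sum>a<A. q a) = 1" and spi: "(\<Sum>a<A. \<pi> a) = 1"
    and foc: "\<forall>a<A. r a + p a / (\<eta> * q a) = lam"
  shows "((\<Sum>a<A. r a * q a) - KL A p q / \<eta>) - ((\<Sum>a<A. r a * \<pi> a) - KL A p \<pi> / \<eta>)
     = (\<Sum>a<A. p a * phi (\<pi> a / q a)) / \<eta>"
proof -
  have each: "(r a * q a - p a * ln (p a / q a) / \<eta>) - (r a * \<pi> a - p a * ln (p a / \<pi> a) / \<eta>)
      = lam * (q a - \<pi> a) + p a * phi (\<pi> a / q a) / \<eta>" if a: "a < A" for a
  proof -
    have pa: "0 < p a" and qa: "0 < q a" and pia: "0 < \<pi> a" using pos a by auto
    have ra: "r a = lam - p a / (\<eta> * q a)" using foc a by (simp add: algebra_simps)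
    have "ln (p a / q a) - ln (p a / \<pi> a) = ln (\<pi> a / q a)"
      using pa qa pia by (simp add: ln_div)
    moreover have "p a * ln (p a / q a) / \<eta> - p a * ln (p a / \<pi> a) / \<eta> = p a * (ln (p a / q a) - ln (p a / \<pi> a)) / \<eta>"
      by (simp add: diff_divide_distrib right_diff_distrib)
    ultimately have "p a * ln (p a / q a) / \<eta> - p a * ln (p a / \<pi> a) / \<eta> = p a * ln (\<pi> a / q a) / \<eta>"
      by simp
    moreover have "r a * q a - r a * \<pi> a = lam * (q a - \<pi> a) + p a * (\<pi> a / q a - 1) / \<eta>"
      unfolding ra using qa eta by (simp add: field_simps)
    moreover have "p a * (\<pi> a / q a - 1 - ln (\<pi> a / q a)) / \<eta> = p a * (\<pi> a / q a - 1) / \<eta> - p a * ln (\<pi> a / q a) / \<eta>"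
      by (simp add: right_diff_distrib diff_divide_distrib)
    ultimately show ?thesis unfolding phi_def by linarith
  qed
  have "((\<Sum>a<A. r a * q a) - KL A p q / \<eta>) - ((\<Sum>a<A. r a * \<pi> a) - KL A p \<pi> / \<eta>)
     = (\<Sum>a<A. (r a * q a - p a * ln (p a / q a) / \<eta>) - (r a * \<pi> a - p a * ln (p a / \<pi> a) / \<eta>))"
    unfolding KL_def by (simp add: sum_subtractf sum_divide_distrib)
  also have "\<dots> = (\<Sum>a<A. lam * (q a - \<pi> a) + p a * phi (\<pi> a / q a) / \<eta>)"
    using each by simp
  also have "\<dots> = (\<Sum>a<A. lam * (q a - \<pi> a)) + (\<Sum>a<A. p a * phi (\<pi> a / q a) / \<eta>)"
    by (rule sum.distrib)
  also have "(\<Sum>a<A. lam * (q a - \<pi> a)) = lam * (\<Sum>a<A. q a - \<pi> a)"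
    by (rule sum_distrib_left[symmetric])
  also have "(\<Sum>a<A. q a - \<pi> a) = 0" using sq spi by (simp add: sum_subtractf)
  also have "(\<Sum>a<A. p a * phi (\<pi> a / q a) / \<eta>) = (\<Sum>a<A. p a * phi (\<pi> a / q a)) / \<eta>"
    by (rule sum_divide_distrib[symmetric])
  finally show ?thesis by simp
qed

definition LB :: "nat \<Rightarrow> nat \<Rightarrow> real \<Rightarrow> (nat \<Rightarrow> real) \<Rightarrow> (nat \<Rightarrow> nat \<Rightarrow> real) \<Rightarrow> (nat \<Rightarrow> nat \<Rightarrow> real)
   \<Rightarrow> (nat \<Rightarrow> nat \<Rightarrow> real) \<Rightarrow> real" where
  "LB S A \<eta> \<rho> p q \<pi> = (\<Sum>s<S. \<rho> s * ((\<Sum>a<A. p s a * phi (\<pi> s a / q s a)) / \<eta>))"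

lemma J_diff:
  assumes eta: "0 < \<eta>"
    and pp: "\<forall>s<S. \<forall>a<A. 0 < p s a" and qp: "is_policy S A q" and pip: "is_policy S A \<pi>"
    and foc: "\<forall>s<S. \<forall>a<A. r s a + p s a / (\<eta> * q s a) = lam s"
  shows "J S A \<eta> r \<rho> p q - J S A \<eta> r \<rho> p \<pi> = LB S A \<eta> \<rho> p q \<pi>"
proof -
  have "J S A \<eta> r \<rho> p q - J S A \<eta> r \<rho> p \<pi>
     = (\<Sum>s<S. \<rho> s * (((\<Sum>a<A. r s a * q s a) - KL A (p s) (q s) / \<eta>)
         - ((\<Sum>a<A. r s a * \<pi> s a) - KL A (p s) (\<pi> s) / \<eta>)))"
    unfolding J_def by (simp add: sum_subtractf right_diff_distrib)
  also have "\<dots> = LB S A \<eta> \<rho> p q \<pi>" unfolding LB_def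
  proof (rule sum.cong[OF refl])
    fix s assume "s \<in> {..<S}"
    then have s: "s < S" by simp
    show "\<rho> s * (((\<Sum>a<A. r s a * q s a) - KL A (p s) (q s) / \<eta>)
         - ((\<Sum>a<A. r s a * \<pi> s a) - KL A (p s) (\<pi> s) / \<eta>))
        = \<rho> s * ((\<Sum>a<A. p s a * phi (\<pi> s a / q s a)) / \<eta>)"
      using ctx_identity[OF eta, of A "p s" "q s" "\<pi> s" "r s" "lam s"] s pp qp pip foc
      unfolding is_policy_def by simp
  qed
  finally show ?thesis .
qed

lemma LB_nonneg:
  assumes eta: "0 < \<eta>" and rho: "\<forall>s<S. 0 \<le> \<rho> s"
    and pp: "\<forall>s<S. \<forall>a<A. 0 < p s a" and qp: "is_policy S A q" and pip: "is_policy S A \<pi>"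
  shows "0 \<le> LB S A \<eta> \<rho> p q \<pi>"
  unfolding LB_def
proof (intro sum_nonneg mult_nonneg_nonneg divide_nonneg_pos)
  fix s a assume s: "s \<in> {..<S}" and a: "a \<in> {..<A}"
  then show "0 \<le> p s a" using pp by (simp add: less_imp_le)
  show "0 \<le> phi (\<pi> s a / q s a)" using s a qp pip unfolding is_policy_def by (intro phi_nonneg) simp
next
  fix s assume "s \<in> {..<S}" then show "0 \<le> \<rho> s" using rho by simp
qed (use eta in simp)

lemma SubOpt_eq:
  assumes eta: "0 < \<eta>" and rho: "\<forall>s<S. 0 \<le> \<rho> s"
    and pp: "\<forall>s<S. \<forall>a<A. 0 < p s a" and qp: "is_policy S A q" and pip: "is_policy S A \<pi>"
    and foc: "\<forall>s<S. \<forall>a<A. r s a + p s a / (\<eta> * q s a) = lam s"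
  shows "SubOpt S A \<eta> r \<rho> p \<pi> = LB S A \<eta> \<rho> p q \<pi>"
proof -
  have "(SUP \<pi>' \<in> {\<pi>'. is_policy S A \<pi>'}. J S A \<eta> r \<rho> p \<pi>') = J S A \<eta> r \<rho> p q"
  proof (rule cSup_eq_maximum)
    show "J S A \<eta> r \<rho> p q \<in> (\<lambda>\<pi>'. J S A \<eta> r \<rho> p \<pi>') ` {\<pi>'. is_policy S A \<pi>'}" using qp by blast
    fix y assume "y \<in> (\<lambda>\<pi>'. J S A \<eta> r \<rho> p \<pi>') ` {\<pi>'. is_policy S A \<pi>'}"
    then obtain \<pi>' where y: "y = J S A \<eta> r \<rho> p \<pi>'" and pp': "is_policy S A \<pi>'" by blast
    show "y \<le> J S A \<eta> r \<rho> p q"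
      using J_diff[OF eta pp qp pp' foc, where \<rho>=\<rho>] LB_nonneg[OF eta rho pp qp pp'] y by simp
  qed
  then show ?thesis unfolding SubOpt_def using J_diff[OF eta pp qp pip foc, where \<rho>=\<rho>] by simp
qed

lemma noise0: "subgaussian_noise (return borel (0::real))"
proof -
  interpret P: prob_space "return borel (0::real)" by (rule prob_space_return) simp
  have int: "integrable (return borel (0::real)) f" if "f \<in> borel_measurable borel" for f :: "real \<Rightarrow> real"
  proof (rule P.integrable_const_bound[where B="norm (f 0)"])
    show "AE x in return borel 0. norm (f x) \<le> norm (f 0)"
      using that by (subst AE_return) auto
  qed (use that in simp)
  show ?thesis unfolding subgaussian_noise_def
    by (auto intro!: int P.prob_space_axioms simp: integral_return)
qed

lemma inst_lower:
  assumes eta: "0 < \<eta>"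
    and p: "\<forall>s. (\<forall>a<A. 0 < p s a) \<and> (\<Sum>a<A. p s a) = 1"
    and rho: "\<forall>s<S. 0 \<le> \<rho> s" "(\<Sum>s<S. \<rho> s) = 1"
    and rr: "\<forall>s<S. \<forall>a<A. 0 \<le> r s a \<and> r s a \<le> 1"
    and qp: "is_policy S A q"
    and foc: "\<forall>s<S. \<forall>a<A. r s a + p s a / (\<eta> * q s a) = lam s"
    and est: "estimator n S A \<pi>hat"
  shows "ennreal (\<Sum>x\<in>Dset n S A. Wt n \<rho> p x * LB S A \<eta> \<rho> p q (\<pi>hat (Dof n r x)))
    \<le> (SUP inst \<in> {(r, \<rho>, \<pi>ref, \<nu>). valid_instance S A r \<rho> \<pi>ref \<nu>}.
          (case inst of (r, \<rho>, \<pi>ref, \<nu>) \<Rightarrow> risk n S A \<eta> \<pi>hat r \<rho> \<pi>ref \<nu>))"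
proof -
  have p': "\<forall>s. (\<forall>a<A. 0 \<le> p s a) \<and> (\<Sum>a<A. p s a) = 1" using p by (auto intro: less_imp_le)
  have pp: "\<forall>s<S. \<forall>a<A. 0 < p s a" using p by auto
  have pol: "is_policy S A p" using p unfolding is_policy_def by auto
  have valid: "valid_instance S A r \<rho> p (return borel 0)"
    unfolding valid_instance_def using rr rho pol noise0 by auto
  have estp: "is_policy S A (\<pi>hat D)" for D using est unfolding estimator_def by auto
  have "ennreal (\<Sum>x\<in>Dset n S A. Wt n \<rho> p x * LB S A \<eta> \<rho> p q (\<pi>hat (Dof n r x)))
     \<le> (\<integral>\<^sup>+D. ennreal (LB S A \<eta> \<rho> p q (\<pi>hat D)) \<partial>data_measure n S A r \<rho> p (return borel 0))"
    by (rule nn_lower[OF p' rho]) (use LB_nonneg[OF eta rho(1) pp qp estp] in auto)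
  also have "\<dots> = risk n S A \<eta> \<pi>hat r \<rho> p (return borel 0)"
    unfolding risk_def using SubOpt_eq[OF eta rho(1) pp qp estp foc] by simp
  also have "\<dots> \<le> (SUP inst \<in> {(r, \<rho>, \<pi>ref, \<nu>). valid_instance S A r \<rho> \<pi>ref \<nu>}.
          (case inst of (r, \<rho>, \<pi>ref, \<nu>) \<Rightarrow> risk n S A \<eta> \<pi>hat r \<rho> \<pi>ref \<nu>))"
    by (rule SUP_upper2[where i="(r, \<rho>, p, return borel 0)"]) (use valid in auto)
  finally show ?thesis .
qed

definition pB :: "nat \<Rightarrow> real \<Rightarrow> nat \<Rightarrow> nat \<Rightarrow> real" where
  "pB A q s a = (if a = 0 then 1 - (real A - 1) * q else q)"
definition kap :: "real \<Rightarrow> real \<Rightarrow> real" where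
  "kap q t = (1 - q * (1 + t)) / (1 - q)"
definition dB :: "real \<Rightarrow> real \<Rightarrow> real \<Rightarrow> real" where
  "dB \<eta> q t = (1 / kap q t - 1 / (1 + t)) / \<eta>"
definition rB :: "real \<Rightarrow> real \<Rightarrow> real \<Rightarrow> nat \<Rightarrow> nat \<Rightarrow> real" where
  "rB \<eta> q t s a = (if a = 1 then dB \<eta> q t else 0)"
definition qB :: "nat \<Rightarrow> real \<Rightarrow> real \<Rightarrow> nat \<Rightarrow> nat \<Rightarrow> real" where
  "qB A q t s a = (if a = 1 then q * (1 + t) else pB A q s a * kap q t)"
definition rhoB :: "nat \<Rightarrow> real" where
  "rhoB s = (if s = 0 then 1 else 0)"

lemma sum_pB: assumes "A \<ge> 2" shows "(\<Sum>a<A. pB A q s a) = 1"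
proof -
  have "(\<Sum>a<A. pB A q s a) = pB A q s 0 + (\<Sum>a\<in>{..<A} - {0}. pB A q s a)"
    using assms by (subst sum.remove[of _ 0]) auto
  also have "(\<Sum>a\<in>{..<A} - {0}. pB A q s a) = (\<Sum>a\<in>{..<A} - {0}. q)"
    by (rule sum.cong) (auto simp: pB_def)
  also have "\<dots> = (real A - 1) * q" using assms by (simp add: of_nat_diff)
  finally show ?thesis by (simp add: pB_def)
qed

lemma sum_qB:
  assumes "A \<ge> 2" "q < 1"
  shows "(\<Sum>a<A. qB A q t s a) = 1"
proof -
  have "(\<Sum>a<A. qB A q t s a) = qB A q t s 1 + (\<Sum>a\<in>{..<A} - {1}. qB A q t s a)"
    using assms by (subst sum.remove[of _ 1]) auto
  also have "(\<Sum>a\<in>{..<A} - {1}. qB A q t s a) = (\<Sum>a\<in>{..<A} - {1}. pB A q s a) * kap q t"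
    by (subst sum_distrib_right) (rule sum.cong, auto simp: qB_def)
  also have "(\<Sum>a\<in>{..<A} - {1}. pB A q s a) = 1 - q"
    using sum_pB[OF assms(1), of q s] assms(1) sum.remove[of "{..<A}" 1 "pB A q s"]
    by (simp add: pB_def)
  finally show ?thesis using assms(2) by (simp add: qB_def kap_def)
qed

lemma max_aux:
  assumes "(B::real) = Z / 4" "Z \<le> L0 + Lt" "L0 / 2 \<le> a" "Lt / 2 \<le> b"
  shows "B \<le> max a b"
proof -
  have "a \<le> max a b" "b \<le> max a b" by auto
  then show ?thesis using assms by linarith
qed

lemma ratio_aux:
  assumes "0 < (c::real)"
  shows "(c - c * k)^2 / (c + c * k)^2 = (1 - k)^2 / (1 + k)^2"
proof -
  have "(c - c * k)^2 = c^2 * (1 - k)^2" by (simp add: power2_eq_square algebra_simps)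
  moreover have "(c + c * k)^2 = c^2 * (1 + k)^2" by (simp add: power2_eq_square algebra_simps)
  ultimately show ?thesis using assms by simp
qed

lemma LB_B:
  assumes eta: "0 < \<eta>" and A: "A \<ge> 2" and S: "S \<ge> 1"
    and pol: "is_policy S A \<pi>" and qp: "is_policy S A (qB A q s')"
    and pp: "\<forall>s a. a < A \<longrightarrow> 0 < pB A q s a"
  shows "(pB A q 0 0 * phi (\<pi> 0 0 / qB A q s' 0 0) + pB A q 0 1 * phi (\<pi> 0 1 / qB A q s' 0 1)) / \<eta>
     \<le> LB S A \<eta> rhoB (pB A q) (qB A q s') \<pi>"
proof -
  let ?X = "\<lambda>s. (\<Sum>a<A. pB A q s a * phi (\<pi> s a / qB A q s' s a)) / \<eta>"
  have "LB S A \<eta> rhoB (pB A q) (qB A q s') \<pi> = (\<Sum>s<S. if s = 0 then ?X s else 0)"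
    unfolding LB_def by (rule sum.cong) (auto simp: rhoB_def)
  also have "\<dots> = ?X 0" using S by simp
  finally have eq: "LB S A \<eta> rhoB (pB A q) (qB A q s') \<pi> = ?X 0" .
  have nn: "0 \<le> pB A q 0 a * phi (\<pi> 0 a / qB A q s' 0 a)" if "a < A" for a
    using that pp pol qp S unfolding is_policy_def
    by (intro mult_nonneg_nonneg phi_nonneg divide_pos_pos) (auto intro: less_imp_le)
  have "(\<Sum>a\<in>{0,1}. pB A q 0 a * phi (\<pi> 0 a / qB A q s' 0 a)) \<le> (\<Sum>a<A. pB A q 0 a * phi (\<pi> 0 a / qB A q s' 0 a))"
    by (rule sum_mono2) (use A nn in auto)
  then show ?thesis unfolding eq using eta by (simp add: divide_right_mono)
qed

lemma single_bound:
  assumes eta: "0 < \<eta>" and A: "A \<ge> 2" and S: "S \<ge> 1"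
    and q: "0 < q" "(real A - 1) * q \<le> 1 / (2 * real n)" and n: "n \<ge> 1"
    and t: "0 \<le> t" "q * (1 + t) < 1"
    and d: "0 \<le> dB \<eta> q t" "dB \<eta> q t \<le> 1"
    and est: "estimator n S A \<pi>hat"
  shows "ennreal ((1 / (4 * \<eta>)) * ((1 - (real A - 1) * q) * (1 - kap q t)^2 / (1 + kap q t)^2
            + q * t^2 / (2 + t)^2))
    \<le> (SUP inst \<in> {(r, \<rho>, \<pi>ref, \<nu>). valid_instance S A r \<rho> \<pi>ref \<nu>}.
          (case inst of (r, \<rho>, \<pi>ref, \<nu>) \<Rightarrow> risk n S A \<eta> \<pi>hat r \<rho> \<pi>ref \<nu>))"
    (is "ennreal ?B \<le> ?SUP")
proof -
  define p0 where "p0 = 1 - (real A - 1) * q"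
  have nq: "real n * ((real A - 1) * q) \<le> 1/2" using q(2) n by (simp add: field_simps)
  have "q \<le> q * (1 + t)" using q t by (simp add: algebra_simps)
  then have q1: "q < 1" using t by linarith
  have Aq: "0 \<le> (real A - 1) * q" using A q by simp
  have "1 * ((real A - 1) * q) \<le> real n * ((real A - 1) * q)"
    by (rule mult_right_mono) (use n Aq in auto)
  then have p0pos: "0 < p0" unfolding p0_def using nq by linarith
  have p0n: "1/2 \<le> p0 ^ n"
  proof -
    have "1 + real n * (- ((real A - 1) * q)) \<le> (1 + - ((real A - 1) * q)) ^ n"
      by (rule Bernoulli_inequality) (use p0pos in \<open>simp add: p0_def\<close>)
    then show ?thesis using nq unfolding p0_def by simp
  qed
  have kpos: "0 < kap q s'" if "0 \<le> s'" "q * (1 + s') < 1" for s'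
    unfolding kap_def using that q1 by simp
  have pBpos: "\<forall>s. (\<forall>a<A. 0 < pB A q s a) \<and> (\<Sum>a<A. pB A q s a) = 1"
    using p0pos q sum_pB[OF A] by (auto simp: pB_def p0_def)
  have rho: "\<forall>s<S. 0 \<le> rhoB s" "(\<Sum>s<S. rhoB s) = 1"
    using S by (auto simp: rhoB_def)
  define x0 :: "nat \<Rightarrow> nat \<times> nat" where "x0 = restrict (\<lambda>_. (0, 0)) {..<n}"
  have x0: "x0 \<in> Dset n S A" unfolding x0_def Dset_def using S A by auto
  have Wx0: "Wt n rhoB (pB A q) x0 = p0 ^ n"
    unfolding Wt_def x0_def by (simp add: rhoB_def pB_def p0_def)
  define D0 where "D0 = Dof n (\<lambda>s a. 0) x0"
  have D0: "Dof n (rB \<eta> q s') x0 = D0" for s'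
    unfolding D0_def Dof_def x0_def by (auto simp: rB_def)
  define \<pi>0 where "\<pi>0 = \<pi>hat D0"
  have pi0: "is_policy S A \<pi>0" using est unfolding estimator_def \<pi>0_def by auto
  have R: "ennreal (p0 ^ n * LB S A \<eta> rhoB (pB A q) (qB A q s') \<pi>0) \<le> ?SUP"
    if s': "0 \<le> s'" "q * (1 + s') < 1" "0 \<le> dB \<eta> q s'" "dB \<eta> q s' \<le> 1" for s'
  proof -
    have qp: "is_policy S A (qB A q s')"
      unfolding is_policy_def using sum_qB[OF A q1] kpos[OF s'(1,2)] pBpos q s'
      by (auto simp: qB_def)
    have foc: "\<forall>s<S. \<forall>a<A. rB \<eta> q s' s a + pB A q s a / (\<eta> * qB A q s' s a) = 1 / (\<eta> * kap q s')"
    proof (intro allI impI)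
      fix s a assume "s < S" "a < A"
      then have pa: "0 < pB A q s a" using pBpos by auto
      have k: "0 < kap q s'" using kpos[OF s'(1,2)] .
      show "rB \<eta> q s' s a + pB A q s a / (\<eta> * qB A q s' s a) = 1 / (\<eta> * kap q s')"
      proof (cases "a = 1")
        case True
        have w: "0 < 1 + s'" using s' by simp
        have e1: "q / (\<eta> * (q * (1 + s'))) = 1 / (\<eta> * (1 + s'))" using q w eta by simp
        have e2: "(1 / kap q s' - 1 / (1 + s')) / \<eta> + 1 / (\<eta> * (1 + s')) = 1 / (\<eta> * kap q s')"
          by (simp add: diff_divide_distrib)
        show ?thesis using True e1 e2 by (simp add: rB_def qB_def dB_def pB_def)
      next
        case False
        then show ?thesis using pa eta k by (simp add: rB_def qB_def field_simps)
      qed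
    qed
    have rr: "\<forall>s<S. \<forall>a<A. 0 \<le> rB \<eta> q s' s a \<and> rB \<eta> q s' s a \<le> 1"
      using s' by (auto simp: rB_def)
    have "p0 ^ n * LB S A \<eta> rhoB (pB A q) (qB A q s') \<pi>0
        = Wt n rhoB (pB A q) x0 * LB S A \<eta> rhoB (pB A q) (qB A q s') (\<pi>hat (Dof n (rB \<eta> q s') x0))"
      using Wx0 D0 \<pi>0_def by simp
    also have "\<dots> \<le> (\<Sum>x\<in>Dset n S A. Wt n rhoB (pB A q) x * LB S A \<eta> rhoB (pB A q) (qB A q s') (\<pi>hat (Dof n (rB \<eta> q s') x)))"
    proof (rule member_le_sum[OF x0])
      fix x assume "x \<in> Dset n S A - {x0}"
      then have x: "x \<in> Dset n S A" by simp
      have "is_policy S A (\<pi>hat (Dof n (rB \<eta> q s') x))" using est unfolding estimator_def by auto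
      then show "0 \<le> Wt n rhoB (pB A q) x * LB S A \<eta> rhoB (pB A q) (qB A q s') (\<pi>hat (Dof n (rB \<eta> q s') x))"
        using Wt_nonneg[of A "pB A q" S rhoB x n] pBpos rho x LB_nonneg[OF eta rho(1) _ qp] 
        by (intro mult_nonneg_nonneg) (auto intro: less_imp_le)
    next
      show "finite (Dset n S A)" unfolding Dset_def by (intro finite_PiE) auto
    qed
    finally have le1: "p0 ^ n * LB S A \<eta> rhoB (pB A q) (qB A q s') \<pi>0 \<le> (\<Sum>x\<in>Dset n S A. Wt n rhoB (pB A q) x * LB S A \<eta> rhoB (pB A q) (qB A q s') (\<pi>hat (Dof n (rB \<eta> q s') x)))" .
    show ?thesis
      by (rule order_trans[OF ennreal_leI[OF le1] inst_lower[OF eta pBpos rho rr qp foc est]])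
  qed
  have k0: "kap q 0 = 1" unfolding kap_def using q1 by simp
  have R0: "ennreal (p0 ^ n * LB S A \<eta> rhoB (pB A q) (qB A q 0) \<pi>0) \<le> ?SUP"
    by (rule R) (use q1 in \<open>simp_all add: dB_def k0\<close>)
  have Rt: "ennreal (p0 ^ n * LB S A \<eta> rhoB (pB A q) (qB A q t) \<pi>0) \<le> ?SUP"
    by (rule R) (use t d in auto)
  have pp: "\<forall>s a. a < A \<longrightarrow> 0 < pB A q s a" using pBpos by auto
  have qp: "is_policy S A (qB A q s')" if "0 \<le> s'" "q * (1 + s') < 1" for s'
    unfolding is_policy_def using sum_qB[OF A q1] kpos[OF that] pBpos q that
    by (auto simp: qB_def)
  have qp0: "is_policy S A (qB A q 0)" using qp[of 0] q1 by simp
  have kt: "0 < kap q t" using kpos[OF t] .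
  define x where "x = \<pi>0 0 0"
  define y where "y = \<pi>0 0 1"
  have xy: "0 < x" "0 < y" using pi0 S A unfolding is_policy_def x_def y_def by auto
  have L0: "(p0 * phi (x / p0) + q * phi (y / q)) / \<eta> \<le> LB S A \<eta> rhoB (pB A q) (qB A q 0) \<pi>0"
    using LB_B[OF eta A S pi0 qp0 pp] k0 unfolding x_def y_def by (simp add: qB_def pB_def p0_def)
  have Lt: "(p0 * phi (x / (p0 * kap q t)) + q * phi (y / (q * (1 + t)))) / \<eta> \<le> LB S A \<eta> rhoB (pB A q) (qB A q t) \<pi>0"
    using LB_B[OF eta A S pi0 qp[OF t] pp] unfolding x_def y_def by (simp add: qB_def pB_def p0_def)
  have P1: "(1 - kap q t)^2 / (1 + kap q t)^2 \<le> phi (x / p0) + phi (x / (p0 * kap q t))"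
  proof -
    have "(p0 - p0 * kap q t)^2 / (p0 + p0 * kap q t)^2 = (1 - kap q t)^2 / (1 + kap q t)^2"
      using ratio_aux[OF p0pos] .
    then show ?thesis using phi_pair[OF xy(1) p0pos, of "p0 * kap q t"] p0pos kt by simp
  qed
  have P2: "t^2 / (2 + t)^2 \<le> phi (y / q) + phi (y / (q * (1 + t)))"
  proof -
    have "(q - q * (1 + t))^2 = q^2 * t^2" by (simp add: power2_eq_square algebra_simps)
    moreover have "(q + q * (1 + t))^2 = q^2 * (2 + t)^2" by (simp add: power2_eq_square algebra_simps)
    ultimately have "(q - q * (1 + t))^2 / (q + q * (1 + t))^2 = t^2 / (2 + t)^2"
      using q by simp
    then show ?thesis using phi_pair[OF xy(2) q(1), of "q * (1 + t)"] q t by simp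
  qed
  have sumL: "(p0 * ((1 - kap q t)^2 / (1 + kap q t)^2) + q * (t^2 / (2 + t)^2)) / \<eta>
      \<le> LB S A \<eta> rhoB (pB A q) (qB A q 0) \<pi>0 + LB S A \<eta> rhoB (pB A q) (qB A q t) \<pi>0"
  proof -
    have "p0 * ((1 - kap q t)^2 / (1 + kap q t)^2) + q * (t^2 / (2 + t)^2)
        \<le> (p0 * phi (x / p0) + q * phi (y / q)) + (p0 * phi (x / (p0 * kap q t)) + q * phi (y / (q * (1 + t))))"
      using mult_left_mono[OF P1, of p0] mult_left_mono[OF P2, of q] p0pos q
      by (simp add: algebra_simps)
    then have "(p0 * ((1 - kap q t)^2 / (1 + kap q t)^2) + q * (t^2 / (2 + t)^2)) / \<eta>
        \<le> (p0 * phi (x / p0) + q * phi (y / q)) / \<eta> + (p0 * phi (x / (p0 * kap q t)) + q * phi (y / (q * (1 + t)))) / \<eta>"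
      using eta by (simp add: divide_right_mono add_divide_distrib[symmetric])
    then show ?thesis using L0 Lt by linarith
  qed
  have LBn0: "0 \<le> LB S A \<eta> rhoB (pB A q) (qB A q 0) \<pi>0"
    by (rule LB_nonneg[OF eta rho(1) _ qp0 pi0]) (use pBpos in auto)
  have LBnt: "0 \<le> LB S A \<eta> rhoB (pB A q) (qB A q t) \<pi>0"
    by (rule LB_nonneg[OF eta rho(1) _ qp[OF t] pi0]) (use pBpos in auto)
  have "?B \<le> max (p0 ^ n * LB S A \<eta> rhoB (pB A q) (qB A q 0) \<pi>0) (p0 ^ n * LB S A \<eta> rhoB (pB A q) (qB A q t) \<pi>0)"
  proof -
    have a: "LB S A \<eta> rhoB (pB A q) (qB A q 0) \<pi>0 / 2 \<le> p0 ^ n * LB S A \<eta> rhoB (pB A q) (qB A q 0) \<pi>0"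
      using mult_right_mono[OF p0n LBn0] by simp
    have b: "LB S A \<eta> rhoB (pB A q) (qB A q t) \<pi>0 / 2 \<le> p0 ^ n * LB S A \<eta> rhoB (pB A q) (qB A q t) \<pi>0"
      using mult_right_mono[OF p0n LBnt] by simp
    have "?B = (p0 * ((1 - kap q t)^2 / (1 + kap q t)^2) + q * (t^2 / (2 + t)^2)) / \<eta> / 4"
      unfolding p0_def by (simp add: field_simps)
    then show ?thesis by (rule max_aux[OF _ sumL a b])
  qed
  then have mx: "?B \<le> max (p0 ^ n * LB S A \<eta> rhoB (pB A q) (qB A q 0) \<pi>0) (p0 ^ n * LB S A \<eta> rhoB (pB A q) (qB A q t) \<pi>0)" .
  show ?thesis
  proof (cases "p0 ^ n * LB S A \<eta> rhoB (pB A q) (qB A q 0) \<pi>0 \<le> p0 ^ n * LB S A \<eta> rhoB (pB A q) (qB A q t) \<pi>0")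
    case True
    then have "?B \<le> p0 ^ n * LB S A \<eta> rhoB (pB A q) (qB A q t) \<pi>0" using mx by (simp add: max_def)
    then show ?thesis by (rule order_trans[OF ennreal_leI Rt])
  next
    case False
    then have "?B \<le> p0 ^ n * LB S A \<eta> rhoB (pB A q) (qB A q 0) \<pi>0" using mx by (simp add: max_def)
    then show ?thesis by (rule order_trans[OF ennreal_leI R0])
  qed
qed

lemma pair_sum: "(\<Sum>a<2*(m::nat). f a) = (\<Sum>j<m. f (2*j) + f (2*j+1))"
  by (induction m) (simp_all add: algebra_simps)

lemma pair_sumA: "(A::nat) = 2 * m \<Longrightarrow> (\<Sum>a<A. f a) = (\<Sum>j<m. f (2*j) + f (2*j+1))"
  by (simp add: pair_sum)

lemma lin_aux: "0 \<le> (a::real) - b \<Longrightarrow> a - b \<le> 1 \<Longrightarrow>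
  0 \<le> 1/2 + (a-b)/2 \<and> 1/2 + (a-b)/2 \<le> 1 \<and> 0 \<le> 1/2 - (a-b)/2 \<and> 1/2 - (a-b)/2 \<le> 1"
  by (intro conjI) (simp_all add: field_simps)

lemma lin_aux2: "1/2 - ((a::real)-b)/2 + a = 1/2 + (a-b)/2 + b"
  by (simp add: field_simps)

definition tA :: "real \<Rightarrow> real" where "tA \<eta> = \<eta> / 4"
definition hA :: "real \<Rightarrow> real" where "hA \<eta> = 1/2 + (1 / (\<eta> * (1 - tA \<eta>)) - 1 / (\<eta> * (1 + tA \<eta>))) / 2"
definition lA :: "real \<Rightarrow> real" where "lA \<eta> = 1/2 - (1 / (\<eta> * (1 - tA \<eta>)) - 1 / (\<eta> * (1 + tA \<eta>))) / 2"
definition rho0 :: "nat \<Rightarrow> nat \<Rightarrow> nat \<Rightarrow> real" where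
  "rho0 n S A = 1 - (real S - 1) * real A / (4 * real n)"
definition rhoA :: "nat \<Rightarrow> nat \<Rightarrow> nat \<Rightarrow> nat \<Rightarrow> real" where
  "rhoA n S A s = (if s = 0 then rho0 n S A else real A / (4 * real n))"
definition eA :: "nat \<Rightarrow> nat \<Rightarrow> nat \<Rightarrow> real" where
  "eA n S A = 1 / (4 * real n * rho0 n S A)"
definition pA :: "nat \<Rightarrow> nat \<Rightarrow> nat \<Rightarrow> nat \<Rightarrow> nat \<Rightarrow> real" where
  "pA n S A s a = (if s = 0 then (if a div 2 = 0 then (1 - (real A - 2) * eA n S A) / 2 else eA n S A) else 1 / real A)"
definition hi :: "(nat \<times> nat \<Rightarrow> bool) \<Rightarrow> nat \<Rightarrow> nat \<Rightarrow> bool" where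
  "hi \<sigma> s a = (\<sigma> (s, a div 2) = even a)"
definition rA :: "real \<Rightarrow> (nat \<times> nat \<Rightarrow> bool) \<Rightarrow> nat \<Rightarrow> nat \<Rightarrow> real" where
  "rA \<eta> \<sigma> s a = (if hi \<sigma> s a then hA \<eta> else lA \<eta>)"
definition qA :: "nat \<Rightarrow> nat \<Rightarrow> nat \<Rightarrow> real \<Rightarrow> (nat \<times> nat \<Rightarrow> bool) \<Rightarrow> nat \<Rightarrow> nat \<Rightarrow> real" where
  "qA n S A \<eta> \<sigma> s a = pA n S A s a * (if hi \<sigma> s a then 1 + tA \<eta> else 1 - tA \<eta>)"

locale setupA =
  fixes n S A :: nat and \<eta> :: real
  assumes A: "even A" "A \<ge> 2" and S: "S \<ge> 1" and eta: "0 < \<eta>" "\<eta> \<le> 2"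
    and n: "real n > 16 * real S * real A"
begin

lemma n_pos: "0 < real n" using n S A by (smt (verit) mult_nonneg_nonneg of_nat_0_le_iff)

lemma SA_small: "real S * real A / (4 * real n) \<le> 1/64"
  using n n_pos by (simp add: field_simps)

lemma rho0_ge: "63/64 \<le> rho0 n S A"
proof -
  have "(real S - 1) * real A / (4 * real n) \<le> real S * real A / (4 * real n)"
    using n_pos by (intro divide_right_mono) (auto simp: algebra_simps)
  then show ?thesis using SA_small unfolding rho0_def by linarith
qed

lemma eA_pos: "0 < eA n S A" unfolding eA_def using rho0_ge n_pos by simp

lemma Ae_small: "(real A - 2) * eA n S A \<le> 1/2"
proof -
  have "(real A - 2) * eA n S A \<le> real A * eA n S A" using eA_pos by (simp add: mult_right_mono)
  also have "\<dots> = real A / (4 * real n * rho0 n S A)" unfolding eA_def by simp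
  also have "\<dots> \<le> real A / (4 * real n * (1/2))"
    using rho0_ge n_pos by (intro divide_left_mono mult_left_mono) auto
  also have "\<dots> \<le> 1/2"
  proof -
    have "1 * real A \<le> real S * real A" by (rule mult_right_mono) (use S in auto)
    then have "real A / (4 * real n) \<le> 1/64" using SA_small n_pos
      by (smt (verit) divide_right_mono of_nat_0_le_iff mult_nonneg_nonneg)
    then show ?thesis by simp
  qed
  finally show ?thesis .
qed

lemma pA_pos: "a < A \<Longrightarrow> 0 < pA n S A s a"
  unfolding pA_def using eA_pos Ae_small A by auto

lemma pA_pair: "pA n S A s (2*j+1) = pA n S A s (2*j)"
  unfolding pA_def by simp

lemma pA_pair': "pA n S A s (Suc (2*j)) = pA n S A s (2*j)"
  unfolding pA_def by simp

lemma pA_sum: "(\<Sum>a<A. pA n S A s a) = 1"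
proof -
  obtain m where m: "A = 2 * m" using A by (auto elim: evenE)
  have m1: "m \<ge> 1" using A m by simp
  have "(\<Sum>a<A. pA n S A s a) = (\<Sum>j<m. pA n S A s (2*j) + pA n S A s (2*j+1))"
    by (rule pair_sumA[OF m])
  also have "\<dots> = (\<Sum>j<m. 2 * pA n S A s (2*j))" by (simp add: pA_pair')
  also have "\<dots> = 1"
  proof (cases "s = 0")
    case True
    have "(\<Sum>j<m. 2 * pA n S A s (2*j)) = (\<Sum>j<m. if j = 0 then 1 - (real A - 2) * eA n S A else 2 * eA n S A)"
      using True by (intro sum.cong) (auto simp: pA_def)
    also have "\<dots> = (1 - (real A - 2) * eA n S A) + (\<Sum>j\<in>{..<m} - {0}. 2 * eA n S A)"
      using m1 by (subst sum.remove[of _ 0]) auto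
    also have "\<dots> = (1 - (real A - 2) * eA n S A) + (real m - 1) * (2 * eA n S A)"
      using m1 by (simp add: of_nat_diff)
    also have "\<dots> = 1" using m by (simp add: algebra_simps)
    finally show ?thesis .
  next
    case False
    then show ?thesis using m m1 by (simp add: pA_def)
  qed
  finally show ?thesis .
qed

lemma rho_sum: "(\<Sum>s<S. rhoA n S A s) = 1"
proof -
  have "(\<Sum>s<S. rhoA n S A s) = rhoA n S A 0 + (\<Sum>s\<in>{..<S} - {0}. rhoA n S A s)"
    using S by (subst sum.remove[of _ 0]) auto
  also have "(\<Sum>s\<in>{..<S} - {0}. rhoA n S A s) = (real S - 1) * (real A / (4 * real n))"
    using S by (simp add: rhoA_def of_nat_diff)
  finally show ?thesis unfolding rhoA_def rho0_def by simp
qed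

lemma rho_nonneg: "0 \<le> rhoA n S A s"
  unfolding rhoA_def using rho0_ge by auto

lemma unit_weight:
  assumes "(s, j) \<in> ({..<S} \<times> {..<A div 2}) - {(0,0)}"
  shows "rhoA n S A s * pA n S A s (2*j) = 1 / (4 * real n)"
proof (cases "s = 0")
  case True
  then have "j \<noteq> 0" using assms by auto
  then show ?thesis using True rho0_ge unfolding rhoA_def pA_def eA_def by simp
next
  case False
  then show ?thesis using A unfolding rhoA_def pA_def by simp
qed

lemma t_bounds: "0 < tA \<eta>" "tA \<eta> \<le> 1/2"
  unfolding tA_def using eta by auto

lemma Delta_bound: "1 / (\<eta> * (1 - tA \<eta>)) - 1 / (\<eta> * (1 + tA \<eta>)) \<le> 1"
proof -
  have t1: "0 < 1 - tA \<eta>" "0 < 1 + tA \<eta>" using t_bounds by auto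
  have gen: "1 / (e * u) - 1 / (e * v) = (v - u) / (e * u * v)" if "e \<noteq> 0" "u \<noteq> 0" "v \<noteq> 0" for e u v :: real
    using that by (simp add: field_simps)
  have "1 / (\<eta> * (1 - tA \<eta>)) - 1 / (\<eta> * (1 + tA \<eta>)) = 2 * tA \<eta> / (\<eta> * (1 - tA \<eta>) * (1 + tA \<eta>))"
    using gen[of \<eta> "1 - tA \<eta>" "1 + tA \<eta>"] t1 eta by simp
  also have "\<dots> = (1/2) / ((1 - tA \<eta>) * (1 + tA \<eta>))"
    using t1 eta unfolding tA_def by simp
  also have "\<dots> \<le> (1/2) / (3/4)"
  proof (rule divide_left_mono)
    have "(1 - tA \<eta>) * (1 + tA \<eta>) = 1 - tA \<eta> ^ 2" by (simp add: algebra_simps power2_eq_square)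
    moreover have "tA \<eta> ^ 2 \<le> (1/2)^2" using t_bounds by (intro power_mono) auto
    ultimately show "3/4 \<le> (1 - tA \<eta>) * (1 + tA \<eta>)" by (simp add: power2_eq_square)
  qed (use t1 in auto)
  finally show ?thesis by simp
qed

lemma Delta_nonneg: "0 \<le> 1 / (\<eta> * (1 - tA \<eta>)) - 1 / (\<eta> * (1 + tA \<eta>))"
proof -
  have t1: "0 < 1 - tA \<eta>" "1 - tA \<eta> \<le> 1 + tA \<eta>" using t_bounds by auto
  then have "\<eta> * (1 - tA \<eta>) \<le> \<eta> * (1 + tA \<eta>)" using eta by simp
  then show ?thesis using t1 eta by (simp add: frac_le)
qed

lemma r_range: "0 \<le> rA \<eta> \<sigma> s a \<and> rA \<eta> \<sigma> s a \<le> 1"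
proof -
  let ?D = "1 / (\<eta> * (1 - tA \<eta>)) - 1 / (\<eta> * (1 + tA \<eta>))"
  have "0 \<le> 1/2 + ?D / 2 \<and> 1/2 + ?D / 2 \<le> 1 \<and> 0 \<le> 1/2 - ?D / 2 \<and> 1/2 - ?D / 2 \<le> 1"
    by (rule lin_aux[OF Delta_nonneg Delta_bound])
  then show ?thesis unfolding rA_def hA_def lA_def by simp
qed

lemma foc: "rA \<eta> \<sigma> s a + pA n S A s a / (\<eta> * qA n S A \<eta> \<sigma> s a) = hA \<eta> + 1 / (\<eta> * (1 + tA \<eta>))"
  if "a < A"
proof -
  have pa: "0 < pA n S A s a" using pA_pos[OF that] .
  have t1: "0 < 1 - tA \<eta>" "0 < 1 + tA \<eta>" using t_bounds by auto
  show ?thesis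
  proof (cases "hi \<sigma> s a")
    case True
    then show ?thesis using pa t1 eta by (simp add: rA_def qA_def)
  next
    case False
    have "pA n S A s a / (\<eta> * (pA n S A s a * (1 - tA \<eta>))) = 1 / (\<eta> * (1 - tA \<eta>))"
      using pa by simp
    moreover have "lA \<eta> + 1 / (\<eta> * (1 - tA \<eta>)) = hA \<eta> + 1 / (\<eta> * (1 + tA \<eta>))"
      unfolding hA_def lA_def by (rule lin_aux2)
    ultimately show ?thesis using False unfolding rA_def qA_def by simp
  qed
qed

lemma qA_policy: "is_policy S A (qA n S A \<eta> \<sigma>)"
  unfolding is_policy_def
proof (intro allI impI conjI)
  fix s a assume "s < S" "a < A"
  then show "0 < qA n S A \<eta> \<sigma> s a" using pA_pos t_bounds by (simp add: qA_def)
next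
  fix s assume "s < S"
  obtain m where m: "A = 2 * m" using A by (auto elim: evenE)
  have "(\<Sum>a<A. qA n S A \<eta> \<sigma> s a) = (\<Sum>j<m. qA n S A \<eta> \<sigma> s (2*j) + qA n S A \<eta> \<sigma> s (2*j+1))"
    by (rule pair_sumA[OF m])
  also have "\<dots> = (\<Sum>j<m. pA n S A s (2*j) + pA n S A s (2*j+1))"
  proof (rule sum.cong[OF refl])
    fix j
    have "hi \<sigma> s (2*j+1) = (\<not> hi \<sigma> s (2*j))" unfolding hi_def by simp
    then show "qA n S A \<eta> \<sigma> s (2*j) + qA n S A \<eta> \<sigma> s (2*j+1) = pA n S A s (2*j) + pA n S A s (2*j+1)"
      unfolding qA_def pA_pair by (auto simp: algebra_simps)
  qed
  also have "\<dots> = (\<Sum>a<A. pA n S A s a)" by (rule pair_sumA[OF m, symmetric])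
  finally show "(\<Sum>a<A. qA n S A \<eta> \<sigma> s a) = 1" using pA_sum by simp
qed

end

definition Tb :: "nat \<Rightarrow> nat \<Rightarrow> nat \<Rightarrow> real \<Rightarrow> bool \<Rightarrow> nat \<Rightarrow> nat \<Rightarrow> (nat \<Rightarrow> nat \<Rightarrow> real) \<Rightarrow> real" where
  "Tb n S A \<eta> b s j \<pi> = rhoA n S A s *
     (pA n S A s (2*j) * phi (\<pi> s (2*j) / (pA n S A s (2*j) * (if b then 1 + tA \<eta> else 1 - tA \<eta>)))
    + pA n S A s (2*j+1) * phi (\<pi> s (2*j+1) / (pA n S A s (2*j+1) * (if b then 1 - tA \<eta> else 1 + tA \<eta>)))) / \<eta>"

context setupA
begin

definition "KK = ({..<S} \<times> {..<A div 2}) - {(0,0)}"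

lemma Tb_nonneg:
  assumes pol: "is_policy S A \<pi>" and s: "s < S" and j: "j < A div 2"
  shows "0 \<le> Tb n S A \<eta> b s j \<pi>"
proof -
  have a1: "2*j < A" "2*j+1 < A" using j A by auto
  have t: "0 < 1 - tA \<eta>" "0 < 1 + tA \<eta>" using t_bounds by auto
  show ?thesis unfolding Tb_def using pol s a1 pA_pos[OF a1(1)] pA_pos[OF a1(2)] t eta rho_nonneg
    unfolding is_policy_def
    by (intro mult_nonneg_nonneg divide_nonneg_pos add_nonneg_nonneg phi_nonneg divide_pos_pos mult_pos_pos)
       (auto intro: less_imp_le)
qed

lemma LB_decomp:
  assumes pol: "is_policy S A \<pi>"
  shows "(\<Sum>k\<in>KK. Tb n S A \<eta> (\<sigma> k) (fst k) (snd k) \<pi>) \<le> LB S A \<eta> (rhoA n S A) (pA n S A) (qA n S A \<eta> \<sigma>) \<pi>"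
proof -
  obtain m where m: "A = 2 * m" using A by (auto elim: evenE)
  have md: "A div 2 = m" using m by simp
  have "LB S A \<eta> (rhoA n S A) (pA n S A) (qA n S A \<eta> \<sigma>) \<pi>
      = (\<Sum>s<S. \<Sum>j<m. Tb n S A \<eta> (\<sigma> (s, j)) s j \<pi>)"
    unfolding LB_def
  proof (rule sum.cong[OF refl])
    fix s assume "s \<in> {..<S}"
    have "(\<Sum>a<A. pA n S A s a * phi (\<pi> s a / qA n S A \<eta> \<sigma> s a))
       = (\<Sum>j<m. pA n S A s (2*j) * phi (\<pi> s (2*j) / qA n S A \<eta> \<sigma> s (2*j))
              + pA n S A s (2*j+1) * phi (\<pi> s (2*j+1) / qA n S A \<eta> \<sigma> s (2*j+1)))"
      by (rule pair_sumA[OF m])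
    moreover have pj: "rhoA n S A s * (pA n S A s (2*j) * phi (\<pi> s (2*j) / qA n S A \<eta> \<sigma> s (2*j))
              + pA n S A s (2*j+1) * phi (\<pi> s (2*j+1) / qA n S A \<eta> \<sigma> s (2*j+1))) / \<eta>
        = Tb n S A \<eta> (\<sigma> (s, j)) s j \<pi>" for j
      unfolding Tb_def qA_def hi_def by (cases "\<sigma> (s, j)") simp_all
    ultimately show "rhoA n S A s * ((\<Sum>a<A. pA n S A s a * phi (\<pi> s a / qA n S A \<eta> \<sigma> s a)) / \<eta>)
        = (\<Sum>j<m. Tb n S A \<eta> (\<sigma> (s, j)) s j \<pi>)"
      by (simp add: sum_distrib_left sum_divide_distrib del: One_nat_def)
  qed
  also have "\<dots> = (\<Sum>k\<in>{..<S} \<times> {..<A div 2}. Tb n S A \<eta> (\<sigma> k) (fst k) (snd k) \<pi>)"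
    unfolding md by (subst sum.cartesian_product) (simp add: case_prod_beta)
  also have "\<dots> \<ge> (\<Sum>k\<in>KK. Tb n S A \<eta> (\<sigma> k) (fst k) (snd k) \<pi>)"
    unfolding KK_def by (rule sum_mono2) (auto intro!: Tb_nonneg[OF pol])
  finally show ?thesis .
qed

lemma Tb_pair:
  assumes pol: "is_policy S A \<pi>" and k: "(s, j) \<in> KK"
  shows "tA \<eta> ^ 2 / (2 * real n * \<eta>) \<le> Tb n S A \<eta> True s j \<pi> + Tb n S A \<eta> False s j \<pi>"
proof -
  have s: "s < S" and j: "j < A div 2" using k unfolding KK_def by auto
  have a1: "2*j < A" "2*j+1 < A" using j A by auto
  define P where "P = pA n S A s (2*j)"
  have P1: "pA n S A s (2*j+1) = P" unfolding P_def by (rule pA_pair)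
  have Ppos: "0 < P" unfolding P_def using pA_pos[OF a1(1)] .
  have t: "0 < 1 - tA \<eta>" "0 < 1 + tA \<eta>" using t_bounds by auto
  have x: "0 < \<pi> s (2*j)" and y: "0 < \<pi> s (2*j+1)" using pol s a1 unfolding is_policy_def by auto
  have key: "tA \<eta> ^ 2 \<le> phi (z / (P * (1 + tA \<eta>))) + phi (z / (P * (1 - tA \<eta>)))" if z: "0 < z" for z
  proof -
    have u: "0 < P * (1 + tA \<eta>)" and v: "0 < P * (1 - tA \<eta>)" using Ppos t by auto
    have "(P * (1 + tA \<eta>) - P * (1 - tA \<eta>))^2 = P^2 * (4 * tA \<eta> ^ 2)"
      by (simp add: power2_eq_square algebra_simps)
    moreover have "(P * (1 + tA \<eta>) + P * (1 - tA \<eta>))^2 = P^2 * 4"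
      by (simp add: power2_eq_square algebra_simps)
    ultimately have "(P * (1 + tA \<eta>) - P * (1 - tA \<eta>))^2 / (P * (1 + tA \<eta>) + P * (1 - tA \<eta>))^2 = tA \<eta> ^ 2"
      using Ppos by simp
    then show ?thesis using phi_pair[OF z u v] by simp
  qed
  have w: "rhoA n S A s * P = 1 / (4 * real n)" unfolding P_def by (rule unit_weight) (use k in \<open>simp add: KK_def\<close>)
  have "Tb n S A \<eta> True s j \<pi> + Tb n S A \<eta> False s j \<pi>
      = rhoA n S A s * P * ((phi (\<pi> s (2*j) / (P * (1 + tA \<eta>))) + phi (\<pi> s (2*j) / (P * (1 - tA \<eta>))))
          + (phi (\<pi> s (2*j+1) / (P * (1 + tA \<eta>))) + phi (\<pi> s (2*j+1) / (P * (1 - tA \<eta>))))) / \<eta>"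
    unfolding Tb_def P1 P_def[symmetric] by (simp add: algebra_simps add_divide_distrib)
  also have "\<dots> \<ge> rhoA n S A s * P * (tA \<eta> ^ 2 + tA \<eta> ^ 2) / \<eta>"
    using key[OF x] key[OF y] rho_nonneg Ppos eta
    by (intro divide_right_mono mult_left_mono add_mono) auto
  finally show ?thesis unfolding w using n_pos by (simp add: field_simps)
qed

end

context setupA
begin

definition "Av k = {x \<in> Dset n S A. \<forall>i<n. (fst (x i), snd (x i) div 2) \<noteq> k}"

lemma Av_weight:
  assumes k: "k \<in> KK"
  shows "1/2 \<le> (\<Sum>x\<in>Av k. Wt n (rhoA n S A) (pA n S A) x)"
proof -
  obtain s j where kk: "k = (s, j)" by (cases k) auto
  have s: "s < S" and j: "j < A div 2" using k kk unfolding KK_def by auto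
  have a1: "2*j < A" "2*j+1 < A" using j A by auto
  define U where "U = {..<S} \<times> {..<A}"
  define Uk where "Uk = {u::nat\<times>nat. (fst u, snd u div 2) = k}"
  define w where "w u = rhoA n S A (fst u) * pA n S A (fst u) (snd u)" for u
  have AvP: "Av k = PiE {..<n} (\<lambda>_. U - Uk)"
    unfolding Av_def Dset_def U_def Uk_def by (auto simp: PiE_def Pi_def)
  have finU: "finite U" unfolding U_def by simp
  have "(\<Sum>x\<in>Av k. Wt n (rhoA n S A) (pA n S A) x) = (\<Sum>x\<in>PiE {..<n} (\<lambda>_. U - Uk). \<Prod>i<n. w (x i))"
    unfolding AvP Wt_def w_def ..
  also have "\<dots> = (\<Prod>i<n. \<Sum>u\<in>U - Uk. w u)"
    by (rule prod_sum_PiE[symmetric]) (use finU in auto)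
  also have "\<dots> = (\<Sum>u\<in>U - Uk. w u) ^ n" by simp
  finally have eq: "(\<Sum>x\<in>Av k. Wt n (rhoA n S A) (pA n S A) x) = (\<Sum>u\<in>U - Uk. w u) ^ n" .
  have sumU: "(\<Sum>u\<in>U. w u) = 1"
  proof -
    have "(\<Sum>u\<in>U. w u) = (\<Sum>s<S. \<Sum>a<A. rhoA n S A s * pA n S A s a)"
      unfolding U_def w_def by (subst sum.cartesian_product) (simp add: case_prod_beta)
    also have "\<dots> = (\<Sum>s<S. rhoA n S A s)" by (simp add: sum_distrib_left[symmetric] pA_sum)
    finally show ?thesis using rho_sum by simp
  qed
  have UUk: "U \<inter> Uk = {(s, 2*j), (s, 2*j+1)}"
    unfolding U_def Uk_def kk using s a1 by auto
  have "(\<Sum>u\<in>U \<inter> Uk. w u) = w (s, 2*j) + w (s, 2*j+1)" unfolding UUk by simp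
  also have "\<dots> = 1 / (2 * real n)"
    unfolding w_def using unit_weight[of s j] pA_pair[of s j] k kk unfolding KK_def by simp
  finally have sumUk: "(\<Sum>u\<in>U \<inter> Uk. w u) = 1 / (2 * real n)" .
  have "(\<Sum>u\<in>U. w u) = (\<Sum>u\<in>U \<inter> Uk. w u) + (\<Sum>u\<in>U - Uk. w u)"
    by (rule sum.Int_Diff[OF finU])
  then have sumB: "(\<Sum>u\<in>U - Uk. w u) = 1 + (- (1 / (2 * real n)))" using sumU sumUk by simp
  have "1 + real n * (- (1 / (2 * real n))) \<le> (1 + (- (1 / (2 * real n)))) ^ n"
    by (rule Bernoulli_inequality) (use n_pos in simp)
  then show ?thesis unfolding eq sumB using n_pos by simp
qed

definition "Sig = {\<sigma> :: nat \<times> nat \<Rightarrow> bool. \<forall>k. k \<notin> KK \<longrightarrow> \<not> \<sigma> k}"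

lemma finite_KK: "finite KK" unfolding KK_def by simp

lemma finite_Sig: "finite Sig"
proof (rule finite_subset)
  show "Sig \<subseteq> (\<lambda>B k. k \<in> B) ` Pow KK"
  proof
    fix \<sigma> assume "\<sigma> \<in> Sig"
    then have "\<sigma> = (\<lambda>k. k \<in> {k. \<sigma> k})" "{k. \<sigma> k} \<in> Pow KK" unfolding Sig_def by auto
    then show "\<sigma> \<in> (\<lambda>B k. k \<in> B) ` Pow KK" by blast
  qed
  show "finite ((\<lambda>B k. k \<in> B) ` Pow KK)" using finite_KK by simp
qed

lemma Sig_ne: "(\<lambda>_. False) \<in> Sig" unfolding Sig_def by simp

lemma flip_sum:
  assumes k: "(s, j) \<in> KK" and x: "x \<in> Av (s, j)" and est: "\<forall>D. is_policy S A (\<pi>hat D)"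
  shows "real (card Sig) * (tA \<eta> ^ 2 / (4 * real n * \<eta>))
     \<le> (\<Sum>\<sigma>\<in>Sig. Tb n S A \<eta> (\<sigma> (s, j)) s j (\<pi>hat (Dof n (rA \<eta> \<sigma>) x)))"
proof -
  define fl where "fl \<sigma> = \<sigma>((s, j) := \<not> \<sigma> (s, j))" for \<sigma> :: "nat \<times> nat \<Rightarrow> bool"
  define F where "F \<sigma> = Tb n S A \<eta> (\<sigma> (s, j)) s j (\<pi>hat (Dof n (rA \<eta> \<sigma>) x))" for \<sigma>
  have Deq: "Dof n (rA \<eta> (fl \<sigma>)) x = Dof n (rA \<eta> \<sigma>) x" for \<sigma>
    unfolding Dof_def
  proof (rule restrict_ext)
    fix i assume "i \<in> {..<n}"
    then have "(fst (x i), snd (x i) div 2) \<noteq> (s, j)" using x unfolding Av_def by auto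
    then have "fl \<sigma> (fst (x i), snd (x i) div 2) = \<sigma> (fst (x i), snd (x i) div 2)"
      unfolding fl_def by (rule fun_upd_other)
    then show "(fst (x i), snd (x i), rA \<eta> (fl \<sigma>) (fst (x i)) (snd (x i)))
        = (fst (x i), snd (x i), rA \<eta> \<sigma> (fst (x i)) (snd (x i)))"
      unfolding rA_def hi_def by simp
  qed
  have flS: "fl \<sigma> \<in> Sig" if "\<sigma> \<in> Sig" for \<sigma> using that k unfolding Sig_def fl_def by auto
  have flfl: "fl (fl \<sigma>) = \<sigma>" for \<sigma> unfolding fl_def by auto
  have "(\<Sum>\<sigma>\<in>Sig. F (fl \<sigma>)) = (\<Sum>\<sigma>\<in>Sig. F \<sigma>)"
    by (rule sum.reindex_bij_witness[of Sig fl fl]) (auto simp: flfl flS)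
  moreover have "F (fl \<sigma>) = Tb n S A \<eta> (\<not> \<sigma> (s, j)) s j (\<pi>hat (Dof n (rA \<eta> \<sigma>) x))" for \<sigma>
    unfolding F_def Deq by (simp add: fl_def)
  ultimately have two: "2 * (\<Sum>\<sigma>\<in>Sig. F \<sigma>) = (\<Sum>\<sigma>\<in>Sig. Tb n S A \<eta> True s j (\<pi>hat (Dof n (rA \<eta> \<sigma>) x)) + Tb n S A \<eta> False s j (\<pi>hat (Dof n (rA \<eta> \<sigma>) x)))"
  proof -
    assume h1: "(\<Sum>\<sigma>\<in>Sig. F (fl \<sigma>)) = (\<Sum>\<sigma>\<in>Sig. F \<sigma>)"
      and h2: "\<And>\<sigma>. F (fl \<sigma>) = Tb n S A \<eta> (\<not> \<sigma> (s, j)) s j (\<pi>hat (Dof n (rA \<eta> \<sigma>) x))"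
    have "2 * (\<Sum>\<sigma>\<in>Sig. F \<sigma>) = (\<Sum>\<sigma>\<in>Sig. F \<sigma>) + (\<Sum>\<sigma>\<in>Sig. F (fl \<sigma>))" using h1 by simp
    also have "\<dots> = (\<Sum>\<sigma>\<in>Sig. F \<sigma> + F (fl \<sigma>))" by (simp add: sum.distrib)
    also have "\<dots> = (\<Sum>\<sigma>\<in>Sig. Tb n S A \<eta> True s j (\<pi>hat (Dof n (rA \<eta> \<sigma>) x)) + Tb n S A \<eta> False s j (\<pi>hat (Dof n (rA \<eta> \<sigma>) x)))"
    proof (rule sum.cong[OF refl])
      fix \<sigma>
      show "F \<sigma> + F (fl \<sigma>) = Tb n S A \<eta> True s j (\<pi>hat (Dof n (rA \<eta> \<sigma>) x)) + Tb n S A \<eta> False s j (\<pi>hat (Dof n (rA \<eta> \<sigma>) x))"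
        unfolding h2 by (cases "\<sigma> (s, j)") (simp_all add: F_def)
    qed
    finally show ?thesis .
  qed
  have "(\<Sum>\<sigma>\<in>Sig. tA \<eta> ^ 2 / (2 * real n * \<eta>)) \<le> (\<Sum>\<sigma>\<in>Sig. Tb n S A \<eta> True s j (\<pi>hat (Dof n (rA \<eta> \<sigma>) x)) + Tb n S A \<eta> False s j (\<pi>hat (Dof n (rA \<eta> \<sigma>) x)))"
    by (rule sum_mono) (rule Tb_pair[OF est[rule_format] k])
  then have "real (card Sig) * (tA \<eta> ^ 2 / (2 * real n * \<eta>)) \<le> 2 * (\<Sum>\<sigma>\<in>Sig. F \<sigma>)"
    unfolding two by simp
  then show ?thesis unfolding F_def using n_pos eta by (simp add: field_simps)
qed

end

context setupA
begin

definition "RR \<pi>hat \<sigma> = (\<Sum>x\<in>Dset n S A. Wt n (rhoA n S A) (pA n S A) x *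
   LB S A \<eta> (rhoA n S A) (pA n S A) (qA n S A \<eta> \<sigma>) (\<pi>hat (Dof n (rA \<eta> \<sigma>) x)))"

lemma main_sum:
  assumes est: "\<forall>D. is_policy S A (\<pi>hat D)"
  shows "real (card Sig) * (real (card KK) * (tA \<eta> ^ 2 / (8 * real n * \<eta>))) \<le> (\<Sum>\<sigma>\<in>Sig. RR \<pi>hat \<sigma>)"
proof -
  let ?W = "\<lambda>x. Wt n (rhoA n S A) (pA n S A) x"
  let ?T = "\<lambda>\<sigma> x k. Tb n S A \<eta> (\<sigma> k) (fst k) (snd k) (\<pi>hat (Dof n (rA \<eta> \<sigma>) x))"
  let ?D = "Dset n S A"
  let ?c = "real (card Sig) * (tA \<eta> ^ 2 / (4 * real n * \<eta>))"
  have pnn: "\<forall>s. (\<forall>a<A. 0 \<le> pA n S A s a) \<and> (\<Sum>a<A. pA n S A s a) = 1"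
    using pA_pos pA_sum by (auto intro: less_imp_le)
  have Wnn: "0 \<le> ?W x" if "x \<in> ?D" for x
    by (rule Wt_nonneg[OF pnn _ that]) (simp add: rho_nonneg)
  have Tnn: "0 \<le> ?T \<sigma> x k" if "k \<in> KK" for \<sigma> x k
    using that unfolding KK_def by (auto intro!: Tb_nonneg est[rule_format])
  have finD: "finite ?D" unfolding Dset_def by (intro finite_PiE) auto
  have "(\<Sum>\<sigma>\<in>Sig. \<Sum>x\<in>?D. ?W x * (\<Sum>k\<in>KK. ?T \<sigma> x k)) \<le> (\<Sum>\<sigma>\<in>Sig. RR \<pi>hat \<sigma>)"
    unfolding RR_def
    by (intro sum_mono mult_left_mono LB_decomp est[rule_format] Wnn) auto
  moreover have "(\<Sum>\<sigma>\<in>Sig. \<Sum>x\<in>?D. ?W x * (\<Sum>k\<in>KK. ?T \<sigma> x k))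
      = (\<Sum>k\<in>KK. \<Sum>x\<in>?D. ?W x * (\<Sum>\<sigma>\<in>Sig. ?T \<sigma> x k))"
  proof -
    have "(\<Sum>\<sigma>\<in>Sig. \<Sum>x\<in>?D. ?W x * (\<Sum>k\<in>KK. ?T \<sigma> x k)) = (\<Sum>\<sigma>\<in>Sig. \<Sum>x\<in>?D. \<Sum>k\<in>KK. ?W x * ?T \<sigma> x k)"
      by (simp add: sum_distrib_left)
    also have "\<dots> = (\<Sum>\<sigma>\<in>Sig. \<Sum>k\<in>KK. \<Sum>x\<in>?D. ?W x * ?T \<sigma> x k)"
      by (rule sum.cong[OF refl]) (rule sum.swap)
    also have "\<dots> = (\<Sum>k\<in>KK. \<Sum>\<sigma>\<in>Sig. \<Sum>x\<in>?D. ?W x * ?T \<sigma> x k)"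
      by (rule sum.swap)
    also have "\<dots> = (\<Sum>k\<in>KK. \<Sum>x\<in>?D. \<Sum>\<sigma>\<in>Sig. ?W x * ?T \<sigma> x k)"
      by (rule sum.cong[OF refl]) (rule sum.swap)
    also have "\<dots> = (\<Sum>k\<in>KK. \<Sum>x\<in>?D. ?W x * (\<Sum>\<sigma>\<in>Sig. ?T \<sigma> x k))"
      by (simp add: sum_distrib_left)
    finally show ?thesis .
  qed
  moreover have "(\<Sum>k\<in>KK. \<Sum>x\<in>Av k. ?W x * (\<Sum>\<sigma>\<in>Sig. ?T \<sigma> x k))
      \<le> (\<Sum>k\<in>KK. \<Sum>x\<in>?D. ?W x * (\<Sum>\<sigma>\<in>Sig. ?T \<sigma> x k))"
  proof (rule sum_mono)
    fix k assume k: "k \<in> KK"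
    show "(\<Sum>x\<in>Av k. ?W x * (\<Sum>\<sigma>\<in>Sig. ?T \<sigma> x k)) \<le> (\<Sum>x\<in>?D. ?W x * (\<Sum>\<sigma>\<in>Sig. ?T \<sigma> x k))"
    proof (rule sum_mono2[OF finD])
      show "Av k \<subseteq> ?D" by (auto simp: Av_def)
      fix x assume "x \<in> ?D - Av k"
      then show "0 \<le> ?W x * (\<Sum>\<sigma>\<in>Sig. ?T \<sigma> x k)"
        using Wnn Tnn[OF k] by (intro mult_nonneg_nonneg sum_nonneg) auto
    qed
  qed
  moreover have "(\<Sum>k\<in>KK. (\<Sum>x\<in>Av k. ?W x) * ?c) \<le> (\<Sum>k\<in>KK. \<Sum>x\<in>Av k. ?W x * (\<Sum>\<sigma>\<in>Sig. ?T \<sigma> x k))"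
  proof (rule sum_mono)
    fix k assume k: "k \<in> KK"
    have "(\<Sum>x\<in>Av k. ?W x) * ?c = (\<Sum>x\<in>Av k. ?W x * ?c)" by (rule sum_distrib_right)
    also have "\<dots> \<le> (\<Sum>x\<in>Av k. ?W x * (\<Sum>\<sigma>\<in>Sig. ?T \<sigma> x k))"
    proof (rule sum_mono)
      fix x assume x: "x \<in> Av k"
      have kk: "(fst k, snd k) \<in> KK" "x \<in> Av (fst k, snd k)" using k x by auto
      show "?W x * ?c \<le> ?W x * (\<Sum>\<sigma>\<in>Sig. ?T \<sigma> x k)"
        using flip_sum[OF kk est] Wnn[of x] x unfolding Av_def
        by (intro mult_left_mono) auto
    qed
    finally show "(\<Sum>x\<in>Av k. ?W x) * ?c \<le> (\<Sum>x\<in>Av k. ?W x * (\<Sum>\<sigma>\<in>Sig. ?T \<sigma> x k))" .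
  qed
  moreover have "(\<Sum>k\<in>KK. (1/2) * ?c) \<le> (\<Sum>k\<in>KK. (\<Sum>x\<in>Av k. ?W x) * ?c)"
  proof (rule sum_mono)
    fix k assume k: "k \<in> KK"
    have "0 \<le> ?c" using n_pos eta by simp
    then show "(1/2) * ?c \<le> (\<Sum>x\<in>Av k. ?W x) * ?c" using Av_weight[OF k] by (intro mult_right_mono) auto
  qed
  moreover have "(\<Sum>k\<in>KK. (1/2) * ?c) = real (card Sig) * (real (card KK) * (tA \<eta> ^ 2 / (8 * real n * \<eta>)))"
    by (simp add: field_simps)
  ultimately show ?thesis by linarith
qed

lemma card_KK: "real (card KK) = real S * real A / 2 - 1"
proof -
  have A2: "A div 2 \<ge> 1" using A by auto
  have "card KK = card ({..<S} \<times> {..<A div 2}) - 1"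
    unfolding KK_def using S A2 by (subst card_Diff_singleton) auto
  also have "\<dots> = S * (A div 2) - 1" by (simp add: card_cartesian_product)
  finally have "card KK = S * (A div 2) - 1" .
  moreover have "S * (A div 2) \<ge> 1" using S A2 by (simp add: one_le_mult_iff)
  moreover have "real (A div 2) = real A / 2" using A by (auto elim: evenE)
  ultimately show ?thesis by (simp add: of_nat_diff)
qed

lemma caseA:
  assumes est: "estimator n S A \<pi>hat" and SA: "S * A \<ge> 4"
  shows "ennreal (\<eta> * real S * real A / (512 * real n))
    \<le> (SUP inst \<in> {(r, \<rho>, \<pi>ref, \<nu>). valid_instance S A r \<rho> \<pi>ref \<nu>}.
          (case inst of (r, \<rho>, \<pi>ref, \<nu>) \<Rightarrow> risk n S A \<eta> \<pi>hat r \<rho> \<pi>ref \<nu>))"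
proof -
  have estp: "\<forall>D. is_policy S A (\<pi>hat D)" using est unfolding estimator_def by auto
  let ?b = "real (card KK) * (tA \<eta> ^ 2 / (8 * real n * \<eta>))"
  have ex: "\<exists>\<sigma>\<in>Sig. ?b \<le> RR \<pi>hat \<sigma>"
  proof (rule ccontr)
    assume "\<not> ?thesis"
    then have "\<forall>\<sigma>\<in>Sig. RR \<pi>hat \<sigma> < ?b" by auto
    then have "(\<Sum>\<sigma>\<in>Sig. RR \<pi>hat \<sigma>) < (\<Sum>\<sigma>\<in>Sig. ?b)"
      using finite_Sig Sig_ne by (intro sum_strict_mono) auto
    then show False using main_sum[OF estp] by simp
  qed
  then obtain \<sigma> where \<sigma>: "?b \<le> RR \<pi>hat \<sigma>" by blast
  have "\<eta> * real S * real A / (512 * real n) \<le> ?b"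
  proof -
    have "real S * real A \<ge> 4" using SA by (metis of_nat_mult of_nat_numeral of_nat_le_iff)
    moreover have "y / 4 \<le> y / 2 - 1" if "4 \<le> y" for y :: real using that by simp
    ultimately have "real S * real A / 4 \<le> real (card KK)" unfolding card_KK by blast
    moreover have "tA \<eta> ^ 2 / (8 * real n * \<eta>) = \<eta> / (128 * real n)"
      unfolding tA_def using eta n_pos by (simp add: field_simps power2_eq_square)
    moreover have "0 \<le> \<eta> / (128 * real n)" using eta n_pos by simp
    ultimately have "real S * real A / 4 * (\<eta> / (128 * real n)) \<le> ?b"
      by (metis mult_right_mono)
    then show ?thesis by (simp add: field_simps)
  qed
  also have "\<dots> \<le> RR \<pi>hat \<sigma>" by (rule \<sigma>)
  finally have le: "\<eta> * real S * real A / (512 * real n) \<le> RR \<pi>hat \<sigma>" .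
  have p: "\<forall>s. (\<forall>a<A. 0 < pA n S A s a) \<and> (\<Sum>a<A. pA n S A s a) = 1" using pA_pos pA_sum by auto
  have rho: "\<forall>s<S. 0 \<le> rhoA n S A s" "(\<Sum>s<S. rhoA n S A s) = 1" using rho_nonneg rho_sum by auto
  have rr: "\<forall>s<S. \<forall>a<A. 0 \<le> rA \<eta> \<sigma> s a \<and> rA \<eta> \<sigma> s a \<le> 1" using r_range by auto
  have fc: "\<forall>s<S. \<forall>a<A. rA \<eta> \<sigma> s a + pA n S A s a / (\<eta> * qA n S A \<eta> \<sigma> s a) = (\<lambda>_. hA \<eta> + 1 / (\<eta> * (1 + tA \<eta>))) s"
    using foc by auto
  show ?thesis
    using order_trans[OF ennreal_leI[OF le[unfolded RR_def]] inst_lower[OF eta(1) p rho rr qA_policy fc est]] .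
qed

end

lemma caseB:
  assumes eta: "2 < \<eta>" and A: "A \<ge> 2" and S: "S \<ge> 1" and n: "n \<ge> 32"
    and est: "estimator n S A \<pi>hat"
  shows "ennreal (1 / (128 * \<eta>))
    \<le> (SUP inst \<in> {(r, \<rho>, \<pi>ref, \<nu>). valid_instance S A r \<rho> \<pi>ref \<nu>}.
          (case inst of (r, \<rho>, \<pi>ref, \<nu>) \<Rightarrow> risk n S A \<eta> \<pi>hat r \<rho> \<pi>ref \<nu>))"
proof -
  define q where "q = 1 / (2 * real n * real A)"
  define t where "t = 1 / (2 * q) - 1"
  have np: "32 \<le> real n" using n by simp
  have Ap: "2 \<le> real A" using A by simp
  have q0: "0 < q" unfolding q_def using np Ap by simp
  have An: "2 * 32 \<le> real A * real n" by (rule mult_mono[OF Ap np]) auto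
  have qs: "q \<le> 1/128" unfolding q_def using An by (simp add: field_simps)
  have Aq: "(real A - 1) * q \<le> 1 / (2 * real n)"
  proof -
    have "(real A - 1) * q \<le> real A * q" using q0 by simp
    also have "\<dots> = 1 / (2 * real n)" unfolding q_def using Ap by simp
    finally show ?thesis .
  qed
  have qt: "q * (1 + t) = 1/2" unfolding t_def using q0 by simp
  have t0: "0 \<le> t" unfolding t_def using qs q0 by (simp add: field_simps)
  have kq: "kap q t = 1 / (2 * (1 - q))" unfolding kap_def qt using qs by (simp add: field_simps)
  have it: "1 / (1 + t) = 2 * q" unfolding t_def using q0 by simp
  have d: "dB \<eta> q t = 2 * (1 - 2 * q) / \<eta>"
    unfolding dB_def kq it using q0 qs by (simp add: field_simps)
  have d0: "0 \<le> dB \<eta> q t" unfolding d using qs eta by simp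
  have d1: "dB \<eta> q t \<le> 1" unfolding d using qs q0 eta by (simp add: field_simps)
  have B: "ennreal ((1 / (4 * \<eta>)) * ((1 - (real A - 1) * q) * (1 - kap q t)^2 / (1 + kap q t)^2
            + q * t^2 / (2 + t)^2))
    \<le> (SUP inst \<in> {(r, \<rho>, \<pi>ref, \<nu>). valid_instance S A r \<rho> \<pi>ref \<nu>}.
          (case inst of (r, \<rho>, \<pi>ref, \<nu>) \<Rightarrow> risk n S A \<eta> \<pi>hat r \<rho> \<pi>ref \<nu>))"
    by (rule single_bound[OF _ A S q0 Aq _ t0 _ d0 d1 est]) (use eta n qt in auto)
  have p0: "1/2 \<le> 1 - (real A - 1) * q"
  proof -
    have "1 / (2 * real n) \<le> 1/2" using np by simp
    then show ?thesis using Aq by linarith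
  qed
  have k1: "kap q t \<le> 3/5" "1/2 \<le> kap q t" unfolding kq using qs q0 by (simp_all add: field_simps)
  have ratio: "1/16 \<le> (1 - kap q t)^2 / (1 + kap q t)^2"
  proof -
    have "(2/5)^2 \<le> (1 - kap q t)^2" using k1 by (intro power_mono) auto
    moreover have "(1 + kap q t)^2 \<le> (8/5)^2" using k1 by (intro power_mono) auto
    moreover have "0 < (1 + kap q t)^2" using k1 by simp
    ultimately have "(2/5)^2 / (8/5)^2 \<le> (1 - kap q t)^2 / (1 + kap q t)^2"
      by (meson frac_le order.trans zero_le_power2 zero_less_power2 less_le_not_le)
    then show ?thesis by (simp add: power2_eq_square)
  qed
  have "1 / (128 * \<eta>) \<le> (1 / (4 * \<eta>)) * ((1 - (real A - 1) * q) * (1 - kap q t)^2 / (1 + kap q t)^2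
            + q * t^2 / (2 + t)^2)"
  proof -
    have "1/2 * (1/16) \<le> (1 - (real A - 1) * q) * ((1 - kap q t)^2 / (1 + kap q t)^2)"
      using p0 ratio by (intro mult_mono) auto
    then have h1: "1/32 \<le> (1 - (real A - 1) * q) * (1 - kap q t)^2 / (1 + kap q t)^2" by simp
    have h2: "0 \<le> q * t^2 / (2 + t)^2" using q0 t0 by simp
    have "1/32 \<le> (1 - (real A - 1) * q) * (1 - kap q t)^2 / (1 + kap q t)^2 + q * t^2 / (2 + t)^2"
      by (rule add_increasing2[OF h2 h1])
    then have "(1 / (4 * \<eta>)) * (1/32) \<le> (1 / (4 * \<eta>)) * ((1 - (real A - 1) * q) * (1 - kap q t)^2 / (1 + kap q t)^2
            + q * t^2 / (2 + t)^2)" using eta by (intro mult_left_mono) auto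
    then show ?thesis by simp
  qed
  then show ?thesis using B by (meson ennreal_leI order_trans)
qed

lemma caseC:
  assumes eta: "0 < \<eta>" "\<eta> \<le> 2" and n: "n \<ge> 32"
    and est: "estimator n 1 2 \<pi>hat"
  shows "ennreal (\<eta> / (1600 * real n))
    \<le> (SUP inst \<in> {(r, \<rho>, \<pi>ref, \<nu>). valid_instance 1 2 r \<rho> \<pi>ref \<nu>}.
          (case inst of (r, \<rho>, \<pi>ref, \<nu>) \<Rightarrow> risk n 1 2 \<eta> \<pi>hat r \<rho> \<pi>ref \<nu>))"
proof -
  define q where "q = 1 / (4 * real n)"
  define t where "t = \<eta> / 4"
  have np: "32 \<le> real n" using n by simp
  have q0: "0 < q" unfolding q_def using np by simp
  have qs: "q \<le> 1/128" unfolding q_def using np by (simp add: field_simps)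
  have Aq: "(real 2 - 1) * q \<le> 1 / (2 * real n)" unfolding q_def using np by (simp add: field_simps)
  have t0: "0 \<le> t" "t \<le> 1/2" unfolding t_def using eta by auto
  have qt1: "q * (1 + t) \<le> 3/256"
  proof -
    have "q * (1 + t) \<le> (1/128) * (3/2)" using qs q0 t0 by (intro mult_mono) auto
    then show ?thesis by simp
  qed
  have qt: "q * (1 + t) < 1" using qt1 by simp
  define D where "D = 1 - q - q * t"
  have D: "q \<le> D" "0 < D" unfolding D_def using qt1 qs q0 by (simp_all add: algebra_simps)
  have ik: "1 / kap q t = (1 - q) / D" unfolding kap_def D_def by (simp add: algebra_simps)
  have ik1: "1 / kap q t - 1 = q * t / D" unfolding ik using D by (simp add: field_simps D_def)
  have ik2: "q * t / D \<le> t"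
  proof -
    have "q * t \<le> D * t" using D t0 by (intro mult_right_mono) auto
    then show ?thesis using D by (simp add: divide_le_eq mult.commute)
  qed
  have it1: "1 - 1 / (1 + t) \<le> t" "1 / (1 + t) \<le> 1"
    using t0 by (simp_all add: field_simps)
  have "0 \<le> q * t / D" using q0 t0 D by simp
  then have ikge: "1 \<le> 1 / kap q t" using ik1 by linarith
  have d0: "0 \<le> dB \<eta> q t" unfolding dB_def using ikge it1 eta by simp
  have d1: "dB \<eta> q t \<le> 1"
  proof -
    have "1 / kap q t - 1 / (1 + t) \<le> 2 * t" using ik1 ik2 it1 by linarith
    also have "\<dots> \<le> \<eta>" unfolding t_def using eta by simp
    finally show ?thesis unfolding dB_def using eta by simp
  qed
  have B: "ennreal ((1 / (4 * \<eta>)) * ((1 - (real 2 - 1) * q) * (1 - kap q t)^2 / (1 + kap q t)^2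
            + q * t^2 / (2 + t)^2))
    \<le> (SUP inst \<in> {(r, \<rho>, \<pi>ref, \<nu>). valid_instance 1 2 r \<rho> \<pi>ref \<nu>}.
          (case inst of (r, \<rho>, \<pi>ref, \<nu>) \<Rightarrow> risk n 1 2 \<eta> \<pi>hat r \<rho> \<pi>ref \<nu>))"
    by (rule single_bound[OF eta(1) _ _ q0 Aq _ t0(1) qt d0 d1 est]) (use n in auto)
  have "\<eta> / (1600 * real n) \<le> (1 / (4 * \<eta>)) * ((1 - (real 2 - 1) * q) * (1 - kap q t)^2 / (1 + kap q t)^2
            + q * t^2 / (2 + t)^2)"
  proof -
    have h1: "0 \<le> (1 - (real 2 - 1) * q) * (1 - kap q t)^2 / (1 + kap q t)^2" using qs by simp
    have "(2 + t)^2 \<le> (5/2)^2" using t0 by (intro power_mono) auto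
    then have "q * t^2 / (5/2)^2 \<le> q * t^2 / (2 + t)^2" using q0 t0
      by (intro divide_left_mono mult_nonneg_nonneg) auto
    moreover have "q * t^2 / (5/2)^2 = \<eta>^2 / (400 * real n)" unfolding q_def t_def
      by (simp add: field_simps power2_eq_square)
    ultimately have h2: "\<eta>^2 / (400 * real n) \<le> q * t^2 / (2 + t)^2" by simp
    have "\<eta>^2 / (400 * real n) \<le> (1 - (real 2 - 1) * q) * (1 - kap q t)^2 / (1 + kap q t)^2 + q * t^2 / (2 + t)^2"
      by (rule add_increasing[OF h1 h2])
    then have "(1 / (4 * \<eta>)) * (\<eta>^2 / (400 * real n)) \<le> (1 / (4 * \<eta>)) * ((1 - (real 2 - 1) * q) * (1 - kap q t)^2 / (1 + kap q t)^2
            + q * t^2 / (2 + t)^2)" using eta by (intro mult_left_mono) auto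
    moreover have "(1 / (4 * \<eta>)) * (\<eta>^2 / (400 * real n)) = \<eta> / (1600 * real n)"
      using eta np by (simp add: field_simps power2_eq_square)
    ultimately show ?thesis by simp
  qed
  then show ?thesis using B by (meson ennreal_leI order_trans)
qed

theorem theorem4p1:
  "\<exists>c::real. c > 0 \<and>
    (\<forall>(A::nat) (S::nat) (\<eta>::real) (n::nat) \<pi>hat.
       even A \<and> A \<ge> 2 \<and> S \<ge> 1 \<and> \<eta> > 0 \<and>
       real n > 16 * real S * real A \<and> real n > 4 * \<eta>\<^sup>2 * real S * real A \<and>
       estimator n S A \<pi>hat \<longrightarrow>
       (SUP inst \<in> {(r, \<rho>, \<pi>ref, \<nu>). valid_instance S A r \<rho> \<pi>ref \<nu>}.
          (case inst of (r, \<rho>, \<pi>ref, \<nu>) \<Rightarrow> risk n S A \<eta> \<pi>hat r \<rho> \<pi>ref \<nu>))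
       \<ge> ennreal (c * \<eta> * real S * real A / real n))"
proof (rule exI[of _ "1/8192"], intro conjI allI impI)
  show "(0::real) < 1/8192" by simp
  fix A S :: nat and \<eta> :: real and n :: nat and \<pi>hat
  assume H: "even A \<and> A \<ge> 2 \<and> S \<ge> 1 \<and> \<eta> > 0 \<and>
       real n > 16 * real S * real A \<and> real n > 4 * \<eta>\<^sup>2 * real S * real A \<and>
       estimator n S A \<pi>hat"
  then have A: "even A" "A \<ge> 2" and S: "S \<ge> 1" and eta: "\<eta> > 0"
    and n1: "real n > 16 * real S * real A" and n2: "real n > 4 * \<eta>\<^sup>2 * real S * real A"
    and est: "estimator n S A \<pi>hat" by auto
  have SA: "1 \<le> real S" "2 \<le> real A" using S A by auto
  have SA2: "2 \<le> real S * real A" using mult_mono[OF SA] by simp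
  have n32: "32 < real n" using n1 SA2 by linarith
  then have n32': "n \<ge> 32" by simp
  have np: "0 < real n" using n32 by simp
  let ?SUP = "(SUP inst \<in> {(r, \<rho>, \<pi>ref, \<nu>). valid_instance S A r \<rho> \<pi>ref \<nu>}.
          (case inst of (r, \<rho>, \<pi>ref, \<nu>) \<Rightarrow> risk n S A \<eta> \<pi>hat r \<rho> \<pi>ref \<nu>))"
  let ?T = "1/8192 * \<eta> * real S * real A / real n"
  show "ennreal ?T \<le> ?SUP"
  proof (cases "2 < \<eta>")
    case True
    have B: "ennreal (1 / (128 * \<eta>)) \<le> ?SUP" by (rule caseB[OF True A(2) S n32' est])
    have "\<eta> * real S * real A / real n \<le> 1 / (4 * \<eta>)"
    proof -
      have "4 * \<eta> * (\<eta> * real S * real A) \<le> real n" using n2 by (simp add: power2_eq_square algebra_simps)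
      then show ?thesis using eta np by (simp add: field_simps)
    qed
    then have h1: "(\<eta> * real S * real A / real n) / 8192 \<le> (1 / (4 * \<eta>)) / 8192" by (rule divide_right_mono) simp
    have h2: "?T = (\<eta> * real S * real A / real n) / 8192" by simp
    have h3: "(1 / (4 * \<eta>)) / 8192 \<le> 1 / (128 * \<eta>)" using eta by (simp add: field_simps)
    have "?T \<le> 1 / (128 * \<eta>)" unfolding h2 by (rule order_trans[OF h1 h3])
    then show ?thesis by (rule order_trans[OF ennreal_leI B])
  next
    case False
    then have eta2: "\<eta> \<le> 2" by simp
    interpret setupA n S A \<eta> by unfold_locales (use A S eta eta2 n1 in auto)
    show ?thesis
    proof (cases "S * A \<ge> 4")
      case True
      have B: "ennreal (\<eta> * real S * real A / (512 * real n)) \<le> ?SUP" by (rule caseA[OF est True])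
      have "?T \<le> \<eta> * real S * real A / (512 * real n)"
        using eta np SA by (simp add: field_simps)
      then show ?thesis by (rule order_trans[OF ennreal_leI B])
    next
      case False
      then have lt: "S * A < 4" by simp
      have S1: "S = 1"
      proof (rule ccontr)
        assume "S \<noteq> 1"
        then have "2 \<le> S" using S by simp
        then have "2 * 2 \<le> S * A" using A(2) by (rule mult_le_mono)
        then show False using lt by simp
      qed
      have A2: "A = 2"
      proof -
        have "A < 4" using lt S1 by simp
        moreover have "A \<noteq> 3" using A(1) by auto
        ultimately show ?thesis using A(2) by simp
      qed
      have B: "ennreal (\<eta> / (1600 * real n)) \<le> ?SUP"
        unfolding S1 A2 by (rule caseC[OF \<open>0 < \<eta>\<close> eta2 n32' est[unfolded S1 A2]])
      have "?T \<le> \<eta> / (1600 * real n)" unfolding S1 A2 using eta np by (simp add: field_simps)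
      then show ?thesis by (rule order_trans[OF ennreal_leI B])
    qed
  qed
qed

end
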